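(* Let $L$ be a queue implementation with fixed dequeue linearization points, and let $\Gamma=C\cup R\cup Lin(deq)$. Then $L$ is a $\Gamma$-refinement of $AbsQ_0$ (i.e. $Tr(L)|\Gamma\subseteq Tr(AbsQ_0)|\Gamma$) if and only if there exists a $\Gamma$-forward simulation from $L$ to $AbsQ$.
   Context: Fix a set $\mathit{Vals}=\mathbb{N}\cup\{\mathtt{EMPTY}\}$, $\mathit{Ops}=\mathbb{N}$, methods $\{enq,deq\}$. Call actions $inv(m,d,k)$ and return actions $ret(m,d,k)$ form sets $C$, $R$; $Lin(deq)=\{lin(deq,d,k)\}$. An LTS $(Q,\Sigma,s_0,\delta)$ has traces = label sequences of finite executions from $s_0$; $Tr(A)$ is its trace set and $\tau|\Gamma$ the projection of $\tau$ onto $\Gamma$ (extended to sets). A library is an LTS with $C\cup R\subseteq\Sigma$ all of whose traces are well formed (every return is preceded by a call with the same operation identifier; each identifier occurs in at most one call and one return) and which is closed under: inserting call actions wherever the result is well formed, moving call actions earlier, and moving return actions later. A queue implementation is a library with methods $\{enq,deq\}$ and values $\mathbb{N}\cup\{\mathtt{EMPTY}\}$ in which no value is enqueued twice in any trace. It has fixed dequeue linearization points if $C\cup R\cup Lin(deq)\subseteq\Sigma$ and in every trace every $ret(deq,d,k)$ is preceded by $lin(deq,d,k)$. For libraries $L_1=(Q_1,\Sigma_1,s^1_0,\delta_1)$, $L_2=(Q_2,\Sigma_2,s^2_0,\delta_2)$ and $C\cup R\subseteq\Gamma\subseteq\Sigma_1\cap\Sigma_2$, a $\Gamma$-forward simulation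 is a relation $fs\subseteq Q_1\times Q_2$ with $fs[s^1_0]=\{s^2_0\}$ such that: if $(s,\gamma,s')\in\delta_1$ with $\gamma\in\Gamma$ and $u\in fs[s]$, there is $u'\in fs[s']$ and a label sequence $\sigma$ with $u\xrightarrow{\sigma}u'$ in $L_2$ where exactly one position of $\sigma$ is $\gamma$ and all others are in $\Sigma_2\setminus\Gamma$; if $(s,e,s')\in\delta_1$ with $e\in\Sigma_1\setminus\Gamma$ and $u\in fs[s]$, there is $u'\in fs[s']$ with $u\xrightarrow{\sigma}u'$, $\sigma\in(\Sigma_2\setminus\Gamma)^*$. $AbsQ_0$: states $(\sigma,in,rv,cp)$, $\sigma\in\mathit{Vals}^*$, partial functions $in,rv$ to values, $cp$ to $\{A_1,A,A_2,R_1,R_2,R_3\}$, all empty initially. Transitions: $inv(enq,d,k)$ ($k\notin dom(cp)$, $d\ne\mathtt{EMPTY}$): $in(k)=d,cp(k)=A_1$; $lin(enq,d,k)$ ($cp(k)=A_1$, $in(k)=d$): $\sigma:=d\cdot\sigma$, $cp(k)=A$; $ret(enq,k)$ ($cp(k)=A$): $cp(k)=A_2$; $inv(deq,k)$ ($k\notin dom(cp)$): $cp(k)=R_1$; $lin(deq,d,k)$ ($cp(k)=R_1$, $\sigma=\sigma'\cdot d$): $\sigma:=\sigma'$, $rv(k)=d$, $cp(k)=R_2$; $lin(deq,\mathtt{EMPTY},k)$ ($cp(k)=R_1$, $\sigma=\epsilon$): $rv(k)=\mathtt{EMPTY}$, $cp(k)=R_2$; $ret(deq,d,k)$ ($cp(k)=R_2$,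 $rv(k)=d$): $cp(k)=R_3$. $AbsQ$: alphabet $C\cup R\cup Lin(deq)$; states $(O,<,\ell,rv,cp)$ with $O\subseteq\mathit{Ops}$, $<$ a strict partial order on $O$, $\ell:O\to\mathit{Vals}\times\{\mathtt{PEND},\mathtt{COMP}\}$ (components $\ell_1,\ell_2$), $rv$ partial to values, $cp$ partial to $\{A_1,A_2,R_1,R_2,R_3\}$, all empty initially. $\mathtt{COMP}(O)=\{k\in O:\ell_2(k)=\mathtt{COMP}\}$; $min(O)$ = $<$-minimal elements; $<\uparrow k'$ = $<$ without pairs containing $k'$. Transitions: $inv(enq,d,k)$ ($k\notin dom(cp)$, $d\ne\mathtt{EMPTY}$): add $k$ to $O$, add $\mathtt{COMP}(O)\times\{k\}$ to $<$, $\ell(k)=(d,\mathtt{PEND})$, $cp(k)=A_1$; $inv(deq,k)$ ($k\notin dom(cp)$): $cp(k)=R_1$; $ret(deq,d,k)$ ($cp(k)=R_2,rv(k)=d$): $cp(k)=R_3$; $ret(enq,k)$ with $cp(k)=A_1$: if $k\in O$ with $\ell(k)=(d,\mathtt{PEND})$ set $\ell(k)=(d,\mathtt{COMP})$, and in either case ($k\in O$ or $k\notin O$) set $cp(k)=A_2$; $lin(deq,d,k)$ ($cp(k)=R_1$, $d\neq\mathtt{EMPTY}$, some $k'\in min(O)$ with $\ell_1(k')=d$): remove $k'$ from $O$, $<:=<\uparrow k'$, $rv(k)=d$, $cp(k)=R_2$; $lin(deq,\mathtt{EMPTY},k)$ ($cp(k)=R_1$, all $o\in O$ have $\ell_2(o)=\mathtt{PEND}$):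 $rv(k)=\mathtt{EMPTY}$, $cp(k)=R_2$. *)

theory Defs
  imports Main
begin

datatype val = Val nat | EMPTY

type_synonym op = nat

datatype 'x act =
    InvEnq nat op          (* inv(enq,d,k), d <> EMPTY *)
  | InvDeq op
  | RetEnq op
  | RetDeq val op
  | LinEnq nat op
  | LinDeq val op
  | Other 'x

definition Calls :: "'x act set" where
  "Calls = range (\<lambda>(d,k). InvEnq d k) \<union> range InvDeq"

definition Rets :: "'x act set" where
  "Rets = range RetEnq \<union> range (\<lambda>(d,k). RetDeq d k)"

definition LinDeqs :: "'x act set" where
  "LinDeqs = range (\<lambda>(d,k). LinDeq d k)"

definition Gamma :: "'x act set" where
  "Gamma = Calls \<union> Rets \<union> LinDeqs"

fun opid :: "'x act \<Rightarrow> op" where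
  "opid (InvEnq d k) = k"
| "opid (InvDeq k) = k"
| "opid (RetEnq k) = k"
| "opid (RetDeq d k) = k"
| "opid (LinEnq d k) = k"
| "opid (LinDeq d k) = k"
| "opid (Other x) = 0"

record ('s, 'l) lts =
  states :: "'s set"
  alpha  :: "'l set"
  init   :: 's
  trans  :: "('s \<times> 'l \<times> 's) set"

definition lts_wf :: "('s, 'l) lts \<Rightarrow> bool" where
  "lts_wf A \<longleftrightarrow> init A \<in> states A \<and> trans A \<subseteq> states A \<times> alpha A \<times> states A"

inductive path :: "('s, 'l) lts \<Rightarrow> 's \<Rightarrow> 'l list \<Rightarrow> 's \<Rightarrow> bool" for A where
  path_nil: "path A s [] s"
| path_cons: "(s, a, s') \<in> trans A \<Longrightarrow> path A s' w t \<Longrightarrow> path A s (a # w) t"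

definition traces :: "('s, 'l) lts \<Rightarrow> 'l list set" where
  "traces A = {w. \<exists>t. path A (init A) w t}"

definition proj :: "'l set \<Rightarrow> 'l list \<Rightarrow> 'l list" where
  "proj G w = filter (\<lambda>a. a \<in> G) w"

definition well_formed :: "'x act list \<Rightarrow> bool" where
  "well_formed w \<longleftrightarrow>
     (\<forall>i < length w. w ! i \<in> Rets \<longrightarrow>
        (\<exists>j < i. w ! j \<in> Calls \<and> opid (w ! j) = opid (w ! i))) \<and>
     (\<forall>i j. i < j \<and> j < length w \<and> w ! i \<in> Calls \<and> w ! j \<in> Calls
        \<longrightarrow> opid (w ! i) \<noteq> opid (w ! j)) \<and>
     (\<forall>i j. i < j \<and> j < length w \<and> w ! i \<in> Rets \<and> w ! j \<in> Rets
        \<longrightarrow> opid (w ! i) \<noteq> opid (w ! j))"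

definition no_dup_enq :: "'x act list \<Rightarrow> bool" where
  "no_dup_enq w \<longleftrightarrow>
     (\<forall>i j d k k'. i < j \<and> j < length w \<and> w ! i = InvEnq d k \<and> w ! j = InvEnq d k' \<longrightarrow> False)"

definition queue_impl :: "('s, 'x act) lts \<Rightarrow> bool" where
  "queue_impl L \<longleftrightarrow>
     lts_wf L \<and> Calls \<union> Rets \<subseteq> alpha L \<and>
     (\<forall>w \<in> traces L. well_formed w \<and> no_dup_enq w) \<and>
     (\<forall>w1 w2 c. w1 @ w2 \<in> traces L \<and> c \<in> Calls \<and> well_formed (w1 @ c # w2)
        \<and> no_dup_enq (w1 @ c # w2) \<longrightarrow> w1 @ c # w2 \<in> traces L) \<and>
     (\<forall>w1 w2 a c. w1 @ a # c # w2 \<in> traces L \<and> c \<in> Calls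
        \<longrightarrow> w1 @ c # a # w2 \<in> traces L) \<and>
     (\<forall>w1 w2 r a. w1 @ r # a # w2 \<in> traces L \<and> r \<in> Rets
        \<longrightarrow> w1 @ a # r # w2 \<in> traces L)"

definition fixed_deq_lin :: "('s, 'x act) lts \<Rightarrow> bool" where
  "fixed_deq_lin L \<longleftrightarrow>
     Calls \<union> Rets \<union> LinDeqs \<subseteq> alpha L \<and>
     (\<forall>w \<in> traces L. \<forall>i < length w. \<forall>d k. w ! i = RetDeq d k \<longrightarrow>
        (\<exists>j < i. w ! j = LinDeq d k))"

definition fwd_sim ::
  "'l set \<Rightarrow> ('s1, 'l) lts \<Rightarrow> ('s2, 'l) lts \<Rightarrow> ('s1 \<times> 's2) set \<Rightarrow> bool" where
  "fwd_sim G L1 L2 fs \<longleftrightarrow>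
     {u. (init L1, u) \<in> fs} = {init L2} \<and>
     (\<forall>s g s' u. (s, g, s') \<in> trans L1 \<and> g \<in> G \<and> (s, u) \<in> fs \<longrightarrow>
        (\<exists>u' w1 w2. (s', u') \<in> fs \<and> path L2 u (w1 @ g # w2) u' \<and>
           set w1 \<subseteq> alpha L2 - G \<and> set w2 \<subseteq> alpha L2 - G)) \<and>
     (\<forall>s e s' u. (s, e, s') \<in> trans L1 \<and> e \<in> alpha L1 - G \<and> (s, u) \<in> fs \<longrightarrow>
        (\<exists>u' w. (s', u') \<in> fs \<and> path L2 u w u' \<and> set w \<subseteq> alpha L2 - G))"

datatype cpoint = A1 | A | A2 | R1 | R2 | R3

record absq0 =
  q0seq :: "val list"
  q0in  :: "op \<Rightarrow> val option"
  q0rv  :: "op \<Rightarrow> val option"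
  q0cp  :: "op \<Rightarrow> cpoint option"

inductive absq0_step :: "absq0 \<Rightarrow> 'x act \<Rightarrow> absq0 \<Rightarrow> bool" where
  inv_enq: "k \<notin> dom (q0cp s) \<Longrightarrow>
     absq0_step s (InvEnq d k) (s\<lparr>q0in := (q0in s)(k \<mapsto> Val d), q0cp := (q0cp s)(k \<mapsto> A1)\<rparr>)"
| lin_enq: "q0cp s k = Some A1 \<Longrightarrow> q0in s k = Some (Val d) \<Longrightarrow>
     absq0_step s (LinEnq d k) (s\<lparr>q0seq := Val d # q0seq s, q0cp := (q0cp s)(k \<mapsto> A)\<rparr>)"
| ret_enq: "q0cp s k = Some A \<Longrightarrow>
     absq0_step s (RetEnq k) (s\<lparr>q0cp := (q0cp s)(k \<mapsto> A2)\<rparr>)"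
| inv_deq: "k \<notin> dom (q0cp s) \<Longrightarrow>
     absq0_step s (InvDeq k) (s\<lparr>q0cp := (q0cp s)(k \<mapsto> R1)\<rparr>)"
| lin_deq: "q0cp s k = Some R1 \<Longrightarrow> q0seq s = sq' @ [d] \<Longrightarrow>
     absq0_step s (LinDeq d k)
       (s\<lparr>q0seq := sq', q0rv := (q0rv s)(k \<mapsto> d), q0cp := (q0cp s)(k \<mapsto> R2)\<rparr>)"
| lin_deq_empty: "q0cp s k = Some R1 \<Longrightarrow> q0seq s = [] \<Longrightarrow>
     absq0_step s (LinDeq EMPTY k)
       (s\<lparr>q0rv := (q0rv s)(k \<mapsto> EMPTY), q0cp := (q0cp s)(k \<mapsto> R2)\<rparr>)"
| ret_deq: "q0cp s k = Some R2 \<Longrightarrow> q0rv s k = Some d \<Longrightarrow>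
     absq0_step s (RetDeq d k) (s\<lparr>q0cp := (q0cp s)(k \<mapsto> R3)\<rparr>)"

definition AbsQ0 :: "(absq0, 'x act) lts" where
  "AbsQ0 = \<lparr> states = UNIV,
             alpha = Calls \<union> Rets \<union> LinDeqs \<union> range (\<lambda>(d,k). LinEnq d k),
             init = \<lparr>q0seq = [], q0in = Map.empty, q0rv = Map.empty, q0cp = Map.empty\<rparr>,
             trans = {(s, a, s'). absq0_step s a s'} \<rparr>"

datatype status = PEND | COMP

record absq =
  qO   :: "op set"
  qlt  :: "(op \<times> op) set"
  qlab :: "op \<Rightarrow> (val \<times> status) option"
  qrv  :: "op \<Rightarrow> val option"
  qcp  :: "op \<Rightarrow> cpoint option"

definition COMPs :: "absq \<Rightarrow> op set" where
  "COMPs s = {k \<in> qO s. \<exists>d. qlab s k = Some (d, COMP)}"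

definition minO :: "absq \<Rightarrow> op set" where
  "minO s = {k \<in> qO s. \<not> (\<exists>k'' \<in> qO s. (k'', k) \<in> qlt s)}"

inductive absq_step :: "absq \<Rightarrow> 'x act \<Rightarrow> absq \<Rightarrow> bool" where
  inv_enq: "k \<notin> dom (qcp s) \<Longrightarrow>
     absq_step s (InvEnq d k)
       (s\<lparr>qO := qO s \<union> {k}, qlt := qlt s \<union> COMPs s \<times> {k},
          qlab := (qlab s)(k \<mapsto> (Val d, PEND)), qcp := (qcp s)(k \<mapsto> A1)\<rparr>)"
| inv_deq: "k \<notin> dom (qcp s) \<Longrightarrow>
     absq_step s (InvDeq k) (s\<lparr>qcp := (qcp s)(k \<mapsto> R1)\<rparr>)"
| ret_deq: "qcp s k = Some R2 \<Longrightarrow> qrv s k = Some d \<Longrightarrow>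
     absq_step s (RetDeq d k) (s\<lparr>qcp := (qcp s)(k \<mapsto> R3)\<rparr>)"
| ret_enq_pend: "qcp s k = Some A1 \<Longrightarrow> k \<in> qO s \<Longrightarrow> qlab s k = Some (d, PEND) \<Longrightarrow>
     absq_step s (RetEnq k)
       (s\<lparr>qlab := (qlab s)(k \<mapsto> (d, COMP)), qcp := (qcp s)(k \<mapsto> A2)\<rparr>)"
| ret_enq_other: "qcp s k = Some A1 \<Longrightarrow> \<not> (k \<in> qO s \<and> (\<exists>d. qlab s k = Some (d, PEND))) \<Longrightarrow>
     absq_step s (RetEnq k) (s\<lparr>qcp := (qcp s)(k \<mapsto> A2)\<rparr>)"
| lin_deq: "qcp s k = Some R1 \<Longrightarrow> d \<noteq> EMPTY \<Longrightarrow> k' \<in> minO s \<Longrightarrow>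
     qlab s k' = Some (d, st) \<Longrightarrow>
     absq_step s (LinDeq d k)
       (s\<lparr>qO := qO s - {k'}, qlt := {(a, b) \<in> qlt s. a \<noteq> k' \<and> b \<noteq> k'},
          qlab := (qlab s)(k' := None),
          qrv := (qrv s)(k \<mapsto> d), qcp := (qcp s)(k \<mapsto> R2)\<rparr>)"
| lin_deq_empty: "qcp s k = Some R1 \<Longrightarrow> (\<forall>o' \<in> qO s. \<exists>d. qlab s o' = Some (d, PEND)) \<Longrightarrow>
     absq_step s (LinDeq EMPTY k)
       (s\<lparr>qrv := (qrv s)(k \<mapsto> EMPTY), qcp := (qcp s)(k \<mapsto> R2)\<rparr>)"

definition AbsQ :: "(absq, 'x act) lts" where
  "AbsQ = \<lparr> states = UNIV,
            alpha = Calls \<union> Rets \<union> LinDeqs,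
            init = \<lparr>qO = {}, qlt = {}, qlab = Map.empty, qrv = Map.empty, qcp = Map.empty\<rparr>,
            trans = {(s, a, s'). absq_step s a s'} \<rparr>"

end

theory Submission
  imports Defs
begin

inductive_simps path_Nil_iff: "path LT s [] t"
inductive_simps path_Cons_iff: "path LT s (a # w) t"

lemma path_append: "path LT s (w1 @ w2) t \<longleftrightarrow> (\<exists>m. path LT s w1 m \<and> path LT m w2 t)"
  by (induction w1 arbitrary: s) (auto simp: path_Nil_iff path_Cons_iff)

lemma path_snoc: "path LT s (w @ [a]) t \<longleftrightarrow> (\<exists>m. path LT s w m \<and> (m, a, t) \<in> trans LT)"
  by (auto simp: path_append path_Nil_iff path_Cons_iff)

lemma Gamma_simps[simp]:
  "InvEnq d k \<in> Gamma" "InvDeq k \<in> Gamma" "RetEnq k \<in> Gamma" "RetDeq v k \<in> Gamma"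
  "LinDeq v k \<in> Gamma" "LinEnq d k \<notin> Gamma" "Other x \<notin> Gamma"
  by (auto simp: Gamma_def Calls_def Rets_def LinDeqs_def image_iff)

lemma proj_simps[simp]: "proj G [] = []" "proj G (a # w) = (if a \<in> G then a # proj G w else proj G w)"
  "proj G (w1 @ w2) = proj G w1 @ proj G w2"
  by (auto simp: proj_def)

lemma alpha_AbsQ: "alpha AbsQ = Gamma" by (simp add: AbsQ_def Gamma_def)
lemma trans_AbsQ[simp]: "(s, a, t) \<in> trans AbsQ \<longleftrightarrow> absq_step s a t" by (simp add: AbsQ_def)
lemma trans_AbsQ0[simp]: "(s, a, t) \<in> trans AbsQ0 \<longleftrightarrow> absq0_step s a t" by (simp add: AbsQ0_def)
lemma init_AbsQ: "init AbsQ = \<lparr>qO = {}, qlt = {}, qlab = Map.empty, qrv = Map.empty, qcp = Map.empty\<rparr>"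
  by (simp add: AbsQ_def)
lemma init_AbsQ0: "init AbsQ0 = \<lparr>q0seq = [], q0in = Map.empty, q0rv = Map.empty, q0cp = Map.empty\<rparr>"
  by (simp add: AbsQ0_def)

lemma absq_step_Gamma: "absq_step s a t \<Longrightarrow> a \<in> Gamma"
  by (erule absq_step.cases) auto

lemma absq0_step_lab: "absq0_step s a t \<Longrightarrow> a \<in> Gamma \<or> (\<exists>d k. a = LinEnq d k)"
  by (erule absq0_step.cases) auto

definition InvQ :: "absq \<Rightarrow> bool" where
"InvQ u \<longleftrightarrow> finite (qO u) \<and> (\<forall>k. k \<in> qO u \<longleftrightarrow> qlab u k \<noteq> None) \<and>
 (\<forall>k v st. qlab u k = Some (v,st) \<longrightarrow> v \<noteq> EMPTY \<and> qcp u k = Some (if st = COMP then A2 else A1)) \<and>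
 qlt u \<subseteq> qO u \<times> qO u \<and> (\<forall>a b. (a,b) \<in> qlt u \<longrightarrow> (\<exists>v. qlab u a = Some (v, COMP))) \<and>
 Relation.trans (qlt u) \<and> irrefl (qlt u)"

lemma InvQ_lab_None: "InvQ u \<Longrightarrow> qcp u k \<noteq> Some A1 \<Longrightarrow> qcp u k \<noteq> Some A2 \<Longrightarrow> qlab u k = None"
  unfolding InvQ_def by (cases "qlab u k") (auto split: if_splits)

lemma InvQ_notO: "InvQ u \<Longrightarrow> qcp u k \<noteq> Some A1 \<Longrightarrow> qcp u k \<noteq> Some A2 \<Longrightarrow> k \<notin> qO u"
  using InvQ_lab_None unfolding InvQ_def by blast

lemma InvQ_init: "InvQ (init AbsQ)"
  by (simp add: InvQ_def init_AbsQ Relation.trans_def irrefl_def)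

lemma InvQ_step: "absq_step u a u' \<Longrightarrow> InvQ u \<Longrightarrow> InvQ u'"
proof (induction rule: absq_step.induct)
  case (inv_enq k s d)
  have kl: "qlab s k = None"
  proof (rule ccontr)
    assume "qlab s k \<noteq> None"
    then obtain v st where "qlab s k = Some (v,st)" by auto
    then show False using inv_enq unfolding InvQ_def by (auto simp: domIff)
  qed
  then have kO: "k \<notin> qO s" using inv_enq unfolding InvQ_def by auto
  have lt: "qlt s \<subseteq> qO s \<times> qO s" and tr: "Relation.trans (qlt s)" and ir: "irrefl (qlt s)"
    and c: "\<forall>a b. (a,b) \<in> qlt s \<longrightarrow> (\<exists>v. qlab s a = Some (v, COMP))"
    using inv_enq unfolding InvQ_def by auto
  have "Relation.trans (qlt s \<union> COMPs s \<times> {k})"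
    unfolding Relation.trans_def
  proof (intro allI impI)
    fix x y z assume a: "(x,y) \<in> qlt s \<union> COMPs s \<times> {k}" "(y,z) \<in> qlt s \<union> COMPs s \<times> {k}"
    show "(x,z) \<in> qlt s \<union> COMPs s \<times> {k}"
    proof (cases "(x,y) \<in> qlt s")
      case True
      then have "y \<noteq> k" "x \<in> qO s" using lt kO by auto
      with a(2) have "(y,z) \<in> qlt s \<or> (y \<in> COMPs s \<and> z = k)" by auto
      then show ?thesis
      proof
        assume "(y,z) \<in> qlt s" then show ?thesis using tr True unfolding Relation.trans_def by blast
      next
        assume "y \<in> COMPs s \<and> z = k"
        moreover have "x \<in> COMPs s" using c True \<open>x \<in> qO s\<close> unfolding COMPs_def by blast
        ultimately show ?thesis by auto
      qed
    next
      case False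
      then have "y = k" using a(1) by auto
      then have False using a(2) lt kO unfolding COMPs_def by auto
      then show ?thesis ..
    qed
  qed
  moreover have "irrefl (qlt s \<union> COMPs s \<times> {k})" using ir kO unfolding irrefl_def COMPs_def by auto
  ultimately show ?case using inv_enq kO kl lt c
    unfolding InvQ_def COMPs_def by (auto split: if_splits)
next
  case (lin_deq s k d k' st)
  have kl: "qlab s k = None" using lin_deq InvQ_lab_None by auto
  show ?case
    using lin_deq(5) kl unfolding InvQ_def minO_def
    apply (clarsimp simp: Relation.trans_def irrefl_def)
    apply (intro conjI)
       apply (auto split: if_splits)
    done
next
  case (inv_deq k s)
  then have "qlab s k = None" by (intro InvQ_lab_None) auto
  with inv_deq show ?case unfolding InvQ_def by (auto split: if_splits)
next
  case (ret_deq s k d)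
  then have "qlab s k = None" by (intro InvQ_lab_None) auto
  with ret_deq show ?case unfolding InvQ_def by (auto split: if_splits)
next
  case (lin_deq_empty s k)
  then have "qlab s k = None" by (intro InvQ_lab_None) auto
  with lin_deq_empty show ?case unfolding InvQ_def by (auto split: if_splits)
next
  case (ret_enq_pend s k d)
  then show ?case unfolding InvQ_def by (auto split: if_splits)
next
  case (ret_enq_other s k)
  have "qlab s k = None"
  proof (rule ccontr)
    assume "qlab s k \<noteq> None"
    then obtain v st where v: "qlab s k = Some (v,st)" by auto
    then have "k \<in> qO s" "qcp s k = Some (if st = COMP then A2 else A1)"
      using ret_enq_other unfolding InvQ_def by auto
    then show False using ret_enq_other v by (cases st) auto
  qed
  with ret_enq_other show ?case unfolding InvQ_def by (auto split: if_splits)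
qed

lemma InvQ_path: "path AbsQ u p v \<Longrightarrow> InvQ u \<Longrightarrow> InvQ v"
  by (induction rule: path.induct) (auto intro: InvQ_step)

definition absc :: "cpoint option \<Rightarrow> cpoint option" where
  "absc c = (if c = Some A then Some A1 else c)"

lemma absc_simps[simp]: "absc None = None" "absc (Some x) = (if x = A then Some A1 else Some x)"
  by (auto simp: absc_def)

lemma absc_eq_None[simp]: "absc c = None \<longleftrightarrow> c = None" by (auto simp: absc_def)
lemma absc_eq_Some: "absc c = Some x \<longleftrightarrow> (if x = A1 then c = Some A1 \<or> c = Some A else x \<noteq> A \<and> c = Some x)"
  by (cases c) (auto simp: absc_def)

definition lab_of :: "absq \<Rightarrow> op \<Rightarrow> val" where "lab_of u k = fst (the (qlab u k))"

definition Brel :: "absq \<Rightarrow> absq0 \<Rightarrow> bool" where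
"Brel u s \<longleftrightarrow>
  (\<forall>k. absc (q0cp s k) = qcp u k) \<and>
  (\<forall>k. q0cp s k = Some A1 \<longrightarrow> k \<in> qO u) \<and>
  (\<forall>k. q0in s k \<noteq> None \<longrightarrow> q0cp s k = Some A1 \<or> q0cp s k = Some A \<or> q0cp s k = Some A2) \<and>
  (\<forall>k\<in>qO u. q0in s k = Some (lab_of u k)) \<and>
  q0rv s = qrv u \<and>
  (\<exists>ls. distinct ls \<and> set ls = {k \<in> qO u. q0cp s k = Some A \<or> q0cp s k = Some A2} \<and>
        q0seq s = map (lab_of u) ls \<and>
        (\<forall>i j. i < j \<longrightarrow> j < length ls \<longrightarrow> (ls!i, ls!j) \<notin> qlt u))"

lemma BrelI:
  assumes "\<And>k. absc (q0cp s k) = qcp u k"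
    "\<And>k. q0cp s k = Some A1 \<Longrightarrow> k \<in> qO u"
    "\<And>k. q0in s k \<noteq> None \<Longrightarrow> q0cp s k = Some A1 \<or> q0cp s k = Some A \<or> q0cp s k = Some A2"
    "\<And>k. k \<in> qO u \<Longrightarrow> q0in s k = Some (lab_of u k)"
    "q0rv s = qrv u"
    "distinct ls" "set ls = {k \<in> qO u. q0cp s k = Some A \<or> q0cp s k = Some A2}"
    "q0seq s = map (lab_of u) ls"
    "\<And>i j. i < j \<Longrightarrow> j < length ls \<Longrightarrow> (ls!i, ls!j) \<notin> qlt u"
  shows "Brel u s"
  unfolding Brel_def using assms by blast

lemma BrelD:
  assumes "Brel u s"
  shows "\<And>k. absc (q0cp s k) = qcp u k"
    "\<And>k. q0cp s k = Some A1 \<Longrightarrow> k \<in> qO u"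
    "\<And>k v. q0in s k = Some v \<Longrightarrow> q0cp s k = Some A1 \<or> q0cp s k = Some A \<or> q0cp s k = Some A2"
    "\<And>k. k \<in> qO u \<Longrightarrow> q0in s k = Some (lab_of u k)"
    "q0rv s = qrv u"
  using assms unfolding Brel_def by blast+

lemma BrelE:
  assumes "Brel u s"
  obtains ls where "distinct ls" "set ls = {k \<in> qO u. q0cp s k = Some A \<or> q0cp s k = Some A2}"
    "q0seq s = map (lab_of u) ls"
    "\<And>i j. i < j \<Longrightarrow> j < length ls \<Longrightarrow> (ls!i, ls!j) \<notin> qlt u"
  using assms unfolding Brel_def by blast

lemma InvQ_O_lab: "InvQ u \<Longrightarrow> k \<in> qO u \<Longrightarrow> \<exists>v st. qlab u k = Some (v, st) \<and> v \<noteq> EMPTY \<and>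
   qcp u k = Some (if st = COMP then A2 else A1)"
  unfolding InvQ_def by fastforce

lemma InvQ_O_cp: "InvQ u \<Longrightarrow> k \<in> qO u \<Longrightarrow> qcp u k = Some A1 \<or> qcp u k = Some A2"
  using InvQ_O_lab[of u k] by (auto split: if_splits)

lemma InvQ_COMP: "InvQ u \<Longrightarrow> k \<in> qO u \<Longrightarrow> qcp u k = Some A2 \<Longrightarrow> k \<in> COMPs u"
  using InvQ_O_lab[of u k] unfolding COMPs_def by (auto split: if_splits)

lemma InvQ_PEND: "InvQ u \<Longrightarrow> k \<in> qO u \<Longrightarrow> qcp u k = Some A1 \<Longrightarrow> \<exists>v. qlab u k = Some (v, PEND)"
  using InvQ_O_lab[of u k] by (auto split: if_splits) (metis status.exhaust)

lemma InvQ_lt: "InvQ u \<Longrightarrow> (a,b) \<in> qlt u \<Longrightarrow> a \<in> COMPs u \<and> b \<in> qO u"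
  unfolding InvQ_def COMPs_def by blast

lemma InvQ_irr: "InvQ u \<Longrightarrow> (a,a) \<notin> qlt u"
  unfolding InvQ_def irrefl_def by blast

lemma COMPs_cp: "InvQ u \<Longrightarrow> k \<in> COMPs u \<Longrightarrow> qcp u k = Some A2"
  unfolding COMPs_def using InvQ_O_lab by fastforce

lemma Brel_lin_enq:
  assumes B: "Brel u s" and I: "InvQ u" and st: "absq0_step s (LinEnq d k) s'"
  shows "Brel u s'"
proof -
  from st have cp: "q0cp s k = Some A1" and inn: "q0in s k = Some (Val d)"
    and s': "s' = s\<lparr>q0seq := Val d # q0seq s, q0cp := (q0cp s)(k \<mapsto> A)\<rparr>"
    by (auto elim: absq0_step.cases)
  obtain ls where ls: "distinct ls" "set ls = {k \<in> qO u. q0cp s k = Some A \<or> q0cp s k = Some A2}"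
    "q0seq s = map (lab_of u) ls" "\<And>i j. i < j \<Longrightarrow> j < length ls \<Longrightarrow> (ls!i, ls!j) \<notin> qlt u"
    using BrelE[OF B] by blast
  note BD = BrelD[OF B]
  have kO: "k \<in> qO u" using BD(2) cp by blast
  have lk: "lab_of u k = Val d" using BD(4)[OF kO] inn by auto
  have kn: "k \<notin> set ls" using ls(2) cp by auto
  have qk: "qcp u k = Some A1" using BD(1)[of k] cp by simp
  have nk: "(k, x) \<notin> qlt u" for x
    using InvQ_lt[OF I, of k x] COMPs_cp[OF I, of k] qk by auto
  show ?thesis
  proof (rule BrelI[where ls = "k # ls"])
    fix i j assume "i < j" "j < length (k # ls)"
    then show "((k#ls)!i, (k#ls)!j) \<notin> qlt u"
      using ls(4) nk by (cases i; cases j) auto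
  next
    show "set (k # ls) = {j \<in> qO u. q0cp s' j = Some A \<or> q0cp s' j = Some A2}"
      using ls(2) kO s' by auto
  next
    fix j show "absc (q0cp s' j) = qcp u j" using BD(1)[of j] s' qk by auto
  next
    fix j show "q0cp s' j = Some A1 \<Longrightarrow> j \<in> qO u" using BD(2)[of j] s' by (auto split: if_splits)
  next
    fix j show "q0in s' j \<noteq> None \<Longrightarrow> q0cp s' j = Some A1 \<or> q0cp s' j = Some A \<or> q0cp s' j = Some A2"
      using BD(3)[of j] s' by auto
  qed (use BD s' ls kn lk in auto)
qed

lemma Brel_fwd:
  assumes st: "absq0_step s a s'" and B: "Brel u s" and I: "InvQ u" and G: "a \<in> Gamma"
  shows "\<exists>u'. absq_step u a u' \<and> Brel u' s'"
  using st B G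
proof (induction rule: absq0_step.induct)
  case (inv_enq k s d)
  note BD = BrelD[OF inv_enq(2)]
  obtain ls where ls: "distinct ls" "set ls = {k \<in> qO u. q0cp s k = Some A \<or> q0cp s k = Some A2}"
    "q0seq s = map (lab_of u) ls" "\<And>i j. i < j \<Longrightarrow> j < length ls \<Longrightarrow> (ls!i, ls!j) \<notin> qlt u"
    using BrelE[OF inv_enq(2)] by blast
  have qk: "qcp u k = None" using BD(1)[of k] inv_enq(1) by (simp add: domIff)
  then have kO: "k \<notin> qO u" using InvQ_O_cp[OF I, of k] by auto
  define u' where "u' = u\<lparr>qO := qO u \<union> {k}, qlt := qlt u \<union> COMPs u \<times> {k},
          qlab := (qlab u)(k \<mapsto> (Val d, PEND)), qcp := (qcp u)(k \<mapsto> A1)\<rparr>"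
  have step: "absq_step u (InvEnq d k) u'" unfolding u'_def using qk by (intro absq_step.inv_enq) auto
  have lo: "lab_of u' j = (if j = k then Val d else lab_of u j)" for j by (simp add: u'_def lab_of_def)
  have kn: "k \<notin> set ls" using ls(2) kO by auto
  have "Brel u' (s\<lparr>q0in := (q0in s)(k \<mapsto> Val d), q0cp := (q0cp s)(k \<mapsto> A1)\<rparr>)"
  proof (rule BrelI[where ls = ls])
    fix i j assume "i < j" "j < length ls"
    then show "(ls!i, ls!j) \<notin> qlt u'" using ls(4) kn unfolding u'_def by (auto simp: nth_mem)
  next
    show "q0seq (s\<lparr>q0in := (q0in s)(k \<mapsto> Val d), q0cp := (q0cp s)(k \<mapsto> A1)\<rparr>) = map (lab_of u') ls"
      using ls(3) kn lo by auto
  next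
    fix j assume "q0in (s\<lparr>q0in := (q0in s)(k \<mapsto> Val d), q0cp := (q0cp s)(k \<mapsto> A1)\<rparr>) j \<noteq> None"
    then show "q0cp (s\<lparr>q0in := (q0in s)(k \<mapsto> Val d), q0cp := (q0cp s)(k \<mapsto> A1)\<rparr>) j = Some A1 \<or>
      q0cp (s\<lparr>q0in := (q0in s)(k \<mapsto> Val d), q0cp := (q0cp s)(k \<mapsto> A1)\<rparr>) j = Some A \<or>
      q0cp (s\<lparr>q0in := (q0in s)(k \<mapsto> Val d), q0cp := (q0cp s)(k \<mapsto> A1)\<rparr>) j = Some A2"
      using BD(3)[of j] by (cases "j = k") auto
  qed (use BD ls kO in \<open>auto simp: u'_def lab_of_def\<close>)
  with step show ?case by blast
next
  case (lin_enq s k d)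
  then show ?case by simp
next
  case (ret_enq s k)
  note BD = BrelD[OF ret_enq(2)]
  obtain ls where ls: "distinct ls" "set ls = {k \<in> qO u. q0cp s k = Some A \<or> q0cp s k = Some A2}"
    "q0seq s = map (lab_of u) ls" "\<And>i j. i < j \<Longrightarrow> j < length ls \<Longrightarrow> (ls!i, ls!j) \<notin> qlt u"
    using BrelE[OF ret_enq(2)] by blast
  have qk: "qcp u k = Some A1" using BD(1)[of k] ret_enq(1) by auto
  show ?case
  proof (cases "k \<in> qO u")
    case True
    then obtain v where v: "qlab u k = Some (v, PEND)" using InvQ_PEND[OF I True qk] by blast
    define u' where "u' = u\<lparr>qlab := (qlab u)(k \<mapsto> (v, COMP)), qcp := (qcp u)(k \<mapsto> A2)\<rparr>"
    have step: "absq_step u (RetEnq k) u'" unfolding u'_def using qk True v by (intro absq_step.ret_enq_pend)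
    have lo: "lab_of u' = lab_of u" using v by (auto simp: u'_def lab_of_def)
    have "Brel u' (s\<lparr>q0cp := (q0cp s)(k \<mapsto> A2)\<rparr>)"
    proof (rule BrelI[where ls = ls])
      fix i j assume "i < j" "j < length ls"
      then show "(ls!i, ls!j) \<notin> qlt u'" using ls(4) unfolding u'_def by auto
    next
      show "set ls = {j \<in> qO u'. q0cp (s\<lparr>q0cp := (q0cp s)(k \<mapsto> A2)\<rparr>) j = Some A \<or> q0cp (s\<lparr>q0cp := (q0cp s)(k \<mapsto> A2)\<rparr>) j = Some A2}"
        using ls(2) ret_enq(1) True by (auto simp: u'_def)
    qed (use BD ls lo in \<open>auto simp: u'_def split: if_splits\<close>)
    with step show ?thesis by blast
  next
    case False
    define u' where "u' = u\<lparr>qcp := (qcp u)(k \<mapsto> A2)\<rparr>"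
    have step: "absq_step u (RetEnq k) u'" unfolding u'_def using qk False by (intro absq_step.ret_enq_other) auto
    have lo: "lab_of u' = lab_of u" by (auto simp: u'_def lab_of_def)
    have "Brel u' (s\<lparr>q0cp := (q0cp s)(k \<mapsto> A2)\<rparr>)"
    proof (rule BrelI[where ls = ls])
      fix i j assume "i < j" "j < length ls"
      then show "(ls!i, ls!j) \<notin> qlt u'" using ls(4) unfolding u'_def by auto
    next
      show "set ls = {j \<in> qO u'. q0cp (s\<lparr>q0cp := (q0cp s)(k \<mapsto> A2)\<rparr>) j = Some A \<or> q0cp (s\<lparr>q0cp := (q0cp s)(k \<mapsto> A2)\<rparr>) j = Some A2}"
        using ls(2) ret_enq(1) False by (auto simp: u'_def)
    qed (use BD ls lo False in \<open>auto simp: u'_def split: if_splits\<close>)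
    with step show ?thesis by blast
  qed
next
  case (inv_deq k s)
  note BD = BrelD[OF inv_deq(2)]
  obtain ls where ls: "distinct ls" "set ls = {k \<in> qO u. q0cp s k = Some A \<or> q0cp s k = Some A2}"
    "q0seq s = map (lab_of u) ls" "\<And>i j. i < j \<Longrightarrow> j < length ls \<Longrightarrow> (ls!i, ls!j) \<notin> qlt u"
    using BrelE[OF inv_deq(2)] by blast
  have qk: "qcp u k = None" using BD(1)[of k] inv_deq(1) by (simp add: domIff)
  then have kO: "k \<notin> qO u" using InvQ_O_cp[OF I, of k] by auto
  define u' where "u' = u\<lparr>qcp := (qcp u)(k \<mapsto> R1)\<rparr>"
  have step: "absq_step u (InvDeq k) u'" unfolding u'_def using qk by (intro absq_step.inv_deq) auto
  have lo: "lab_of u' = lab_of u" by (auto simp: u'_def lab_of_def)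
  have "Brel u' (s\<lparr>q0cp := (q0cp s)(k \<mapsto> R1)\<rparr>)"
  proof (rule BrelI[where ls = ls])
    fix i j assume "i < j" "j < length ls"
    then show "(ls!i, ls!j) \<notin> qlt u'" using ls(4) unfolding u'_def by auto
  next
    fix j show "q0in (s\<lparr>q0cp := (q0cp s)(k \<mapsto> R1)\<rparr>) j \<noteq> None \<Longrightarrow>
      q0cp (s\<lparr>q0cp := (q0cp s)(k \<mapsto> R1)\<rparr>) j = Some A1 \<or> q0cp (s\<lparr>q0cp := (q0cp s)(k \<mapsto> R1)\<rparr>) j = Some A \<or>
      q0cp (s\<lparr>q0cp := (q0cp s)(k \<mapsto> R1)\<rparr>) j = Some A2"
      using BD(3)[of j] inv_deq(1) by (auto simp: domIff)
  qed (use BD ls lo kO in \<open>auto simp: u'_def split: if_splits\<close>)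
  with step show ?case by blast
next
  case (lin_deq s k sq' d)
  note BD = BrelD[OF lin_deq(3)]
  obtain ls where ls: "distinct ls" "set ls = {k \<in> qO u. q0cp s k = Some A \<or> q0cp s k = Some A2}"
    "q0seq s = map (lab_of u) ls" "\<And>i j. i < j \<Longrightarrow> j < length ls \<Longrightarrow> (ls!i, ls!j) \<notin> qlt u"
    using BrelE[OF lin_deq(3)] by blast
  have qk: "qcp u k = Some R1" using BD(1)[of k] lin_deq(1) by auto
  have kO: "k \<notin> qO u" using InvQ_O_cp[OF I, of k] qk by auto
  obtain ls' k' where lsk: "ls = ls' @ [k']" using ls(3) lin_deq(2)
    by (cases ls rule: rev_exhaust) auto
  have sq: "sq' = map (lab_of u) ls'" and dk: "d = lab_of u k'" using ls(3) lin_deq(2) lsk by auto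
  have k'O: "k' \<in> qO u" using ls(2) lsk by auto
  obtain st where lk': "qlab u k' = Some (d, st)" and dE: "d \<noteq> EMPTY"
    using InvQ_O_lab[OF I k'O] dk by (auto simp: lab_of_def)
  have kk': "k \<noteq> k'" using kO k'O by auto
  have k'cp: "q0cp s k' = Some A \<or> q0cp s k' = Some A2" using ls(2) lsk by auto
  have k'n: "k' \<notin> set ls'" using ls(1) lsk by auto
  have minO: "k' \<in> minO u"
    unfolding minO_def
  proof (safe)
    show "k' \<in> qO u" by fact
  next
    fix j assume jO: "j \<in> qO u" and jk: "(j, k') \<in> qlt u"
    have "j \<in> COMPs u" using InvQ_lt[OF I jk] by blast
    then have "qcp u j = Some A2" using COMPs_cp[OF I] by blast
    then have "q0cp s j = Some A2" using BD(1)[of j] by (auto simp: absc_eq_Some)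
    then have "j \<in> set ls" using ls(2) jO by auto
    moreover have "j \<noteq> k'" using jk InvQ_irr[OF I] by blast
    ultimately have "j \<in> set ls'" using lsk by auto
    then obtain i where i: "i < length ls'" "ls' ! i = j" by (auto simp: in_set_conv_nth)
    have "(ls!i, ls!(length ls')) \<notin> qlt u" using ls(4)[of i "length ls'"] i lsk by auto
    moreover have "ls!i = j" "ls!(length ls') = k'" using i lsk by (auto simp: nth_append)
    ultimately show False using jk by simp
  qed
  define u' where "u' = u\<lparr>qO := qO u - {k'}, qlt := {(a, b) \<in> qlt u. a \<noteq> k' \<and> b \<noteq> k'},
          qlab := (qlab u)(k' := None), qrv := (qrv u)(k \<mapsto> d), qcp := (qcp u)(k \<mapsto> R2)\<rparr>"
  have step: "absq_step u (LinDeq d k) u'" unfolding u'_def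
    by (rule absq_step.lin_deq[OF qk dE minO lk'])
  have lo: "\<forall>j\<in>set ls'. lab_of u' j = lab_of u j" using k'n by (auto simp: u'_def lab_of_def)
  have "Brel u' (s\<lparr>q0seq := sq', q0rv := (q0rv s)(k \<mapsto> d), q0cp := (q0cp s)(k \<mapsto> R2)\<rparr>)"
  proof (rule BrelI[where ls = ls'])
    fix i j assume "i < j" "j < length ls'"
    then show "(ls'!i, ls'!j) \<notin> qlt u'" using ls(4)[of i j] lsk unfolding u'_def by (auto simp: nth_append)
  next
    show "distinct ls'" using ls(1) lsk by auto
  next
    show "set ls' = {j \<in> qO u'. q0cp (s\<lparr>q0seq := sq', q0rv := (q0rv s)(k \<mapsto> d), q0cp := (q0cp s)(k \<mapsto> R2)\<rparr>) j = Some A \<or>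
      q0cp (s\<lparr>q0seq := sq', q0rv := (q0rv s)(k \<mapsto> d), q0cp := (q0cp s)(k \<mapsto> R2)\<rparr>) j = Some A2}"
      using ls(2) lsk kO k'n ls(1) by (auto simp: u'_def)
  next
    show "q0seq (s\<lparr>q0seq := sq', q0rv := (q0rv s)(k \<mapsto> d), q0cp := (q0cp s)(k \<mapsto> R2)\<rparr>) = map (lab_of u') ls'"
      using sq lo by simp
  next
    fix j show "q0in (s\<lparr>q0seq := sq', q0rv := (q0rv s)(k \<mapsto> d), q0cp := (q0cp s)(k \<mapsto> R2)\<rparr>) j \<noteq> None \<Longrightarrow>
      q0cp (s\<lparr>q0seq := sq', q0rv := (q0rv s)(k \<mapsto> d), q0cp := (q0cp s)(k \<mapsto> R2)\<rparr>) j = Some A1 \<or>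
      q0cp (s\<lparr>q0seq := sq', q0rv := (q0rv s)(k \<mapsto> d), q0cp := (q0cp s)(k \<mapsto> R2)\<rparr>) j = Some A \<or>
      q0cp (s\<lparr>q0seq := sq', q0rv := (q0rv s)(k \<mapsto> d), q0cp := (q0cp s)(k \<mapsto> R2)\<rparr>) j = Some A2"
      using BD(3)[of j] lin_deq(1) by auto
  next
    fix j assume "j \<in> qO u'"
    then show "q0in (s\<lparr>q0seq := sq', q0rv := (q0rv s)(k \<mapsto> d), q0cp := (q0cp s)(k \<mapsto> R2)\<rparr>) j = Some (lab_of u' j)"
      using BD(4)[of j] by (auto simp: u'_def lab_of_def)
  qed (use BD kO kk' k'cp lin_deq(1) in \<open>auto simp: u'_def split: if_splits\<close>)
  with step show ?case by blast
next
  case (lin_deq_empty s k)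
  note BD = BrelD[OF lin_deq_empty(3)]
  obtain ls where ls: "distinct ls" "set ls = {k \<in> qO u. q0cp s k = Some A \<or> q0cp s k = Some A2}"
    "q0seq s = map (lab_of u) ls" "\<And>i j. i < j \<Longrightarrow> j < length ls \<Longrightarrow> (ls!i, ls!j) \<notin> qlt u"
    using BrelE[OF lin_deq_empty(3)] by blast
  have qk: "qcp u k = Some R1" using BD(1)[of k] lin_deq_empty(1) by auto
  have kO: "k \<notin> qO u" using InvQ_O_cp[OF I, of k] qk by auto
  have ls0: "ls = []" using ls(3) lin_deq_empty(2) by simp
  have allp: "\<forall>o' \<in> qO u. \<exists>d. qlab u o' = Some (d, PEND)"
  proof
    fix j assume jO: "j \<in> qO u"
    have "qcp u j \<noteq> Some A2"
    proof
      assume "qcp u j = Some A2"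
      then have "q0cp s j = Some A2" using BD(1)[of j] by (auto simp: absc_eq_Some)
      then show False using ls(2) ls0 jO by auto
    qed
    then have "qcp u j = Some A1" using InvQ_O_cp[OF I jO] by auto
    then show "\<exists>d. qlab u j = Some (d, PEND)" using InvQ_PEND[OF I jO] by blast
  qed
  define u' where "u' = u\<lparr>qrv := (qrv u)(k \<mapsto> EMPTY), qcp := (qcp u)(k \<mapsto> R2)\<rparr>"
  have step: "absq_step u (LinDeq EMPTY k) u'" unfolding u'_def
    by (rule absq_step.lin_deq_empty[OF qk allp])
  have lo: "lab_of u' = lab_of u" by (auto simp: u'_def lab_of_def)
  have "Brel u' (s\<lparr>q0rv := (q0rv s)(k \<mapsto> EMPTY), q0cp := (q0cp s)(k \<mapsto> R2)\<rparr>)"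
  proof (rule BrelI[where ls = ls])
    fix j show "q0in (s\<lparr>q0rv := (q0rv s)(k \<mapsto> EMPTY), q0cp := (q0cp s)(k \<mapsto> R2)\<rparr>) j \<noteq> None \<Longrightarrow>
      q0cp (s\<lparr>q0rv := (q0rv s)(k \<mapsto> EMPTY), q0cp := (q0cp s)(k \<mapsto> R2)\<rparr>) j = Some A1 \<or>
      q0cp (s\<lparr>q0rv := (q0rv s)(k \<mapsto> EMPTY), q0cp := (q0cp s)(k \<mapsto> R2)\<rparr>) j = Some A \<or>
      q0cp (s\<lparr>q0rv := (q0rv s)(k \<mapsto> EMPTY), q0cp := (q0cp s)(k \<mapsto> R2)\<rparr>) j = Some A2"
      using BD(3)[of j] lin_deq_empty(1) by auto
  qed (use BD ls ls0 lo kO in \<open>auto simp: u'_def split: if_splits\<close>)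
  with step show ?case by blast
next
  case (ret_deq s k d)
  note BD = BrelD[OF ret_deq(3)]
  obtain ls where ls: "distinct ls" "set ls = {k \<in> qO u. q0cp s k = Some A \<or> q0cp s k = Some A2}"
    "q0seq s = map (lab_of u) ls" "\<And>i j. i < j \<Longrightarrow> j < length ls \<Longrightarrow> (ls!i, ls!j) \<notin> qlt u"
    using BrelE[OF ret_deq(3)] by blast
  have qk: "qcp u k = Some R2" using BD(1)[of k] ret_deq(1) by auto
  have kO: "k \<notin> qO u" using InvQ_O_cp[OF I, of k] qk by auto
  define u' where "u' = u\<lparr>qcp := (qcp u)(k \<mapsto> R3)\<rparr>"
  have step: "absq_step u (RetDeq d k) u'" unfolding u'_def
    using qk ret_deq(2) BD(5) by (intro absq_step.ret_deq) auto
  have lo: "lab_of u' = lab_of u" by (auto simp: u'_def lab_of_def)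
  have "Brel u' (s\<lparr>q0cp := (q0cp s)(k \<mapsto> R3)\<rparr>)"
  proof (rule BrelI[where ls = ls])
    fix j show "q0in (s\<lparr>q0cp := (q0cp s)(k \<mapsto> R3)\<rparr>) j \<noteq> None \<Longrightarrow>
      q0cp (s\<lparr>q0cp := (q0cp s)(k \<mapsto> R3)\<rparr>) j = Some A1 \<or> q0cp (s\<lparr>q0cp := (q0cp s)(k \<mapsto> R3)\<rparr>) j = Some A \<or>
      q0cp (s\<lparr>q0cp := (q0cp s)(k \<mapsto> R3)\<rparr>) j = Some A2"
      using BD(3)[of j] ret_deq(1) by auto
  qed (use BD ls lo kO in \<open>auto simp: u'_def split: if_splits\<close>)
  with step show ?case by blast
qed

definition uniq_enq :: "'x act list \<Rightarrow> bool" where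
  "uniq_enq p \<longleftrightarrow> (\<forall>n k k'. InvEnq n k \<in> set p \<longrightarrow> InvEnq n k' \<in> set p \<longrightarrow> k = k')"

definition LabP :: "absq \<Rightarrow> 'x act list \<Rightarrow> bool" where
  "LabP u p \<longleftrightarrow> (\<forall>k\<in>qO u. \<exists>n. lab_of u k = Val n \<and> InvEnq n k \<in> set p)"

lemma LabP_step: "absq_step u a u' \<Longrightarrow> LabP u p \<Longrightarrow> LabP u' (p @ [a])"
  by (induction rule: absq_step.induct) (auto simp: LabP_def lab_of_def)

lemma absq_det:
  assumes "absq_step u a u1" "absq_step u a u2" "InvQ u"
    and U: "\<forall>k1\<in>qO u. \<forall>k2\<in>qO u. lab_of u k1 = lab_of u k2 \<longrightarrow> k1 = k2"
  shows "u1 = u2"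
  using assms(1)
proof (cases rule: absq_step.cases)
  case (lin_deq k d k' st)
  note outer = lin_deq
  from assms(2) show ?thesis
  proof (cases rule: absq_step.cases)
    case (lin_deq k2 d2 k'' st2)
    then have "k' = k''" using U outer
      by (auto simp: minO_def lab_of_def)
    then show ?thesis using lin_deq outer by auto
  qed (use outer in auto)
qed (use assms(2) in \<open>cases rule: absq_step.cases; auto\<close>)+

abbreviation "i0 \<equiv> \<lparr>q0seq = [], q0in = Map.empty, q0rv = Map.empty, q0cp = Map.empty\<rparr>"
abbreviation "iQ \<equiv> \<lparr>qO = {}, qlt = {}, qlab = Map.empty, qrv = Map.empty, qcp = Map.empty\<rparr>"

lemma Brel_init: "Brel iQ i0"
  by (rule BrelI[where ls = "[]"]) auto

lemma J:
  assumes "path AbsQ0 i0 x s0" "path AbsQ iQ (proj Gamma x) u"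
    "uniq_enq (proj Gamma x)"
  shows "Brel u s0 \<and> LabP u (proj Gamma x)"
  using assms
proof (induction x arbitrary: s0 u rule: rev_induct)
  case Nil
  then show ?case using Brel_init by (auto simp: path_Nil_iff LabP_def)
next
  case (snoc a x)
  from snoc.prems(1) obtain m where m: "path AbsQ0 i0 x m" "absq0_step m a s0"
    by (auto simp: path_snoc)
  show ?case
  proof (cases "a \<in> Gamma")
    case True
    then have pe: "proj Gamma (x @ [a]) = proj Gamma x @ [a]" by simp
    from snoc.prems(2) obtain um where um: "path AbsQ iQ (proj Gamma x) um" "absq_step um a u"
      unfolding pe by (auto simp: path_snoc)
    have ue: "uniq_enq (proj Gamma x)" using snoc.prems(3) unfolding pe uniq_enq_def by auto
    from snoc.IH[OF m(1) um(1) ue] have IH: "Brel um m" "LabP um (proj Gamma x)" by auto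
    have I: "InvQ um" using InvQ_path[OF um(1) InvQ_init[unfolded init_AbsQ]] .
    obtain u' where u': "absq_step um a u'" "Brel u' s0" using Brel_fwd[OF m(2) IH(1) I True] by blast
    have U: "\<forall>k1\<in>qO um. \<forall>k2\<in>qO um. lab_of um k1 = lab_of um k2 \<longrightarrow> k1 = k2"
      using IH(2) ue unfolding LabP_def uniq_enq_def by (metis val.inject)
    have "u = u'" using absq_det[OF um(2) u'(1) I U] .
    then show ?thesis using u' LabP_step[OF um(2) IH(2)] pe by simp
  next
    case False
    then obtain d k where ak: "a = LinEnq d k" using absq0_step_lab[OF m(2)] by blast
    have pe: "proj Gamma (x @ [a]) = proj Gamma x" using False by simp
    from snoc.IH[OF m(1)] snoc.prems(2,3) pe have IH: "Brel u m" "LabP u (proj Gamma x)" by auto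
    have I: "InvQ u" using InvQ_path[OF snoc.prems(2) InvQ_init[unfolded init_AbsQ]] .
    show ?thesis using Brel_lin_enq[OF IH(1) I m(2)[unfolded ak]] IH(2) pe by simp
  qed
qed

fun unval :: "val \<Rightarrow> nat" where "unval (Val n) = n" | "unval EMPTY = 0"

lemma lin_list:
  "distinct xs \<Longrightarrow> (\<forall>x\<in>set xs. q0cp s x = Some A1 \<and> (\<exists>n. q0in s x = Some (Val n))) \<Longrightarrow>
   path (AbsQ0 :: (absq0, 'x act) lts) s (map (\<lambda>x. LinEnq (unval (the (q0in s x))) x) (rev xs))
     (s\<lparr>q0seq := map (\<lambda>x. the (q0in s x)) xs @ q0seq s,
        q0cp := (\<lambda>j. if j \<in> set xs then Some A else q0cp s j)\<rparr>)"
proof (induction xs)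
  case Nil
  then show ?case by (simp add: path_Nil_iff)
next
  case (Cons x xs)
  let ?s1 = "s\<lparr>q0seq := map (\<lambda>x. the (q0in s x)) xs @ q0seq s,
        q0cp := (\<lambda>j. if j \<in> set xs then Some A else q0cp s j)\<rparr>"
  have p1: "path (AbsQ0 :: (absq0, 'x act) lts) s (map (\<lambda>x. LinEnq (unval (the (q0in s x))) x) (rev xs)) ?s1"
    using Cons by auto
  obtain n where n: "q0in s x = Some (Val n)" using Cons.prems by auto
  have cpx: "q0cp ?s1 x = Some A1" using Cons.prems by auto
  have "absq0_step ?s1 (LinEnq n x) (?s1\<lparr>q0seq := Val n # q0seq ?s1, q0cp := (q0cp ?s1)(x \<mapsto> A)\<rparr>)"
    by (rule absq0_step.lin_enq) (use cpx n in auto)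
  moreover have "?s1\<lparr>q0seq := Val n # q0seq ?s1, q0cp := (q0cp ?s1)(x \<mapsto> A)\<rparr> =
     s\<lparr>q0seq := map (\<lambda>x. the (q0in s x)) (x # xs) @ q0seq s,
        q0cp := (\<lambda>j. if j \<in> set (x # xs) then Some A else q0cp s j)\<rparr>"
    using n by (auto simp: fun_eq_iff)
  ultimately show ?case using p1 n by (auto simp: path_append path_Cons_iff path_Nil_iff)
qed

lemma step_in_irrel:
  "absq0_step s a s' \<Longrightarrow> q0cp s k = Some A \<or> q0cp s k = Some A2 \<Longrightarrow>
   absq0_step (s\<lparr>q0in := (q0in s)(k := v)\<rparr>) a (s'\<lparr>q0in := (q0in s')(k := v)\<rparr>) \<and>
   (q0cp s' k = Some A \<or> q0cp s' k = Some A2)"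
proof (induction rule: absq0_step.induct)
  case (inv_enq j s d)
  let ?S = "s\<lparr>q0in := (q0in s)(k := v)\<rparr>"
  have jk: "j \<noteq> k" using inv_enq by auto
  have st0: "absq0_step ?S (InvEnq d j)
     (?S\<lparr>q0in := (q0in ?S)(j \<mapsto> Val d), q0cp := (q0cp ?S)(j \<mapsto> A1)\<rparr>)"
    by (rule absq0_step.inv_enq) (use inv_enq in auto)
  have eq: "?S\<lparr>q0in := (q0in ?S)(j \<mapsto> Val d), q0cp := (q0cp ?S)(j \<mapsto> A1)\<rparr> =
    (s\<lparr>q0in := (q0in s)(j \<mapsto> Val d), q0cp := (q0cp s)(j \<mapsto> A1)\<rparr>)\<lparr>q0in :=
       (q0in (s\<lparr>q0in := (q0in s)(j \<mapsto> Val d), q0cp := (q0cp s)(j \<mapsto> A1)\<rparr>))(k := v)\<rparr>"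
    using jk by (simp add: fun_upd_twist)
  show ?case
  proof (rule conjI)
    show "q0cp (s\<lparr>q0in := (q0in s)(j \<mapsto> Val d), q0cp := (q0cp s)(j \<mapsto> A1)\<rparr>) k = Some A \<or>
      q0cp (s\<lparr>q0in := (q0in s)(j \<mapsto> Val d), q0cp := (q0cp s)(j \<mapsto> A1)\<rparr>) k = Some A2"
      using inv_enq jk by simp
  qed (rule st0[unfolded eq])
next
  case (lin_enq s j d)
  let ?S = "s\<lparr>q0in := (q0in s)(k := v)\<rparr>"
  have st0: "absq0_step ?S (LinEnq d j) (?S\<lparr>q0seq := Val d # q0seq ?S, q0cp := (q0cp ?S)(j \<mapsto> A)\<rparr>)"
    by (rule absq0_step.lin_enq) (use lin_enq in auto)
  have eq: "?S\<lparr>q0seq := Val d # q0seq ?S, q0cp := (q0cp ?S)(j \<mapsto> A)\<rparr> = (s\<lparr>q0seq := Val d # q0seq s, q0cp := (q0cp s)(j \<mapsto> A)\<rparr>)\<lparr>q0in := (q0in (s\<lparr>q0seq := Val d # q0seq s, q0cp := (q0cp s)(j \<mapsto> A)\<rparr>))(k := v)\<rparr>"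
    by simp
  show ?case
  proof (rule conjI)
    show "q0cp (s\<lparr>q0seq := Val d # q0seq s, q0cp := (q0cp s)(j \<mapsto> A)\<rparr>) k = Some A \<or> q0cp (s\<lparr>q0seq := Val d # q0seq s, q0cp := (q0cp s)(j \<mapsto> A)\<rparr>) k = Some A2"
      using lin_enq by (cases "j = k") auto
  qed (rule st0[unfolded eq])
next
  case (ret_enq s j)
  let ?S = "s\<lparr>q0in := (q0in s)(k := v)\<rparr>"
  have st0: "absq0_step ?S (RetEnq j) (?S\<lparr>q0cp := (q0cp ?S)(j \<mapsto> A2)\<rparr>)"
    by (rule absq0_step.ret_enq) (use ret_enq in auto)
  have eq: "?S\<lparr>q0cp := (q0cp ?S)(j \<mapsto> A2)\<rparr> = (s\<lparr>q0cp := (q0cp s)(j \<mapsto> A2)\<rparr>)\<lparr>q0in := (q0in (s\<lparr>q0cp := (q0cp s)(j \<mapsto> A2)\<rparr>))(k := v)\<rparr>"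
    by simp
  show ?case
  proof (rule conjI)
    show "q0cp (s\<lparr>q0cp := (q0cp s)(j \<mapsto> A2)\<rparr>) k = Some A \<or> q0cp (s\<lparr>q0cp := (q0cp s)(j \<mapsto> A2)\<rparr>) k = Some A2"
      using ret_enq by (cases "j = k") auto
  qed (rule st0[unfolded eq])
next
  case (inv_deq j s)
  let ?S = "s\<lparr>q0in := (q0in s)(k := v)\<rparr>"
  have st0: "absq0_step ?S (InvDeq j) (?S\<lparr>q0cp := (q0cp ?S)(j \<mapsto> R1)\<rparr>)"
    by (rule absq0_step.inv_deq) (use inv_deq in auto)
  have eq: "?S\<lparr>q0cp := (q0cp ?S)(j \<mapsto> R1)\<rparr> = (s\<lparr>q0cp := (q0cp s)(j \<mapsto> R1)\<rparr>)\<lparr>q0in := (q0in (s\<lparr>q0cp := (q0cp s)(j \<mapsto> R1)\<rparr>))(k := v)\<rparr>"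
    by simp
  show ?case
  proof (rule conjI)
    show "q0cp (s\<lparr>q0cp := (q0cp s)(j \<mapsto> R1)\<rparr>) k = Some A \<or> q0cp (s\<lparr>q0cp := (q0cp s)(j \<mapsto> R1)\<rparr>) k = Some A2"
      using inv_deq by (cases "j = k") auto
  qed (rule st0[unfolded eq])
next
  case (lin_deq s j sq' d)
  let ?S = "s\<lparr>q0in := (q0in s)(k := v)\<rparr>"
  have st0: "absq0_step ?S (LinDeq d j) (?S\<lparr>q0seq := sq', q0rv := (q0rv ?S)(j \<mapsto> d), q0cp := (q0cp ?S)(j \<mapsto> R2)\<rparr>)"
    by (rule absq0_step.lin_deq) (use lin_deq in auto)
  have eq: "?S\<lparr>q0seq := sq', q0rv := (q0rv ?S)(j \<mapsto> d), q0cp := (q0cp ?S)(j \<mapsto> R2)\<rparr> = (s\<lparr>q0seq := sq', q0rv := (q0rv s)(j \<mapsto> d), q0cp := (q0cp s)(j \<mapsto> R2)\<rparr>)\<lparr>q0in := (q0in (s\<lparr>q0seq := sq', q0rv := (q0rv s)(j \<mapsto> d), q0cp := (q0cp s)(j \<mapsto> R2)\<rparr>))(k := v)\<rparr>"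
    by simp
  show ?case
  proof (rule conjI)
    show "q0cp (s\<lparr>q0seq := sq', q0rv := (q0rv s)(j \<mapsto> d), q0cp := (q0cp s)(j \<mapsto> R2)\<rparr>) k = Some A \<or> q0cp (s\<lparr>q0seq := sq', q0rv := (q0rv s)(j \<mapsto> d), q0cp := (q0cp s)(j \<mapsto> R2)\<rparr>) k = Some A2"
      using lin_deq by (cases "j = k") auto
  qed (rule st0[unfolded eq])
next
  case (lin_deq_empty s j)
  let ?S = "s\<lparr>q0in := (q0in s)(k := v)\<rparr>"
  have st0: "absq0_step ?S (LinDeq EMPTY j) (?S\<lparr>q0rv := (q0rv ?S)(j \<mapsto> EMPTY), q0cp := (q0cp ?S)(j \<mapsto> R2)\<rparr>)"
    by (rule absq0_step.lin_deq_empty) (use lin_deq_empty in auto)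
  have eq: "?S\<lparr>q0rv := (q0rv ?S)(j \<mapsto> EMPTY), q0cp := (q0cp ?S)(j \<mapsto> R2)\<rparr> = (s\<lparr>q0rv := (q0rv s)(j \<mapsto> EMPTY), q0cp := (q0cp s)(j \<mapsto> R2)\<rparr>)\<lparr>q0in := (q0in (s\<lparr>q0rv := (q0rv s)(j \<mapsto> EMPTY), q0cp := (q0cp s)(j \<mapsto> R2)\<rparr>))(k := v)\<rparr>"
    by simp
  show ?case
  proof (rule conjI)
    show "q0cp (s\<lparr>q0rv := (q0rv s)(j \<mapsto> EMPTY), q0cp := (q0cp s)(j \<mapsto> R2)\<rparr>) k = Some A \<or> q0cp (s\<lparr>q0rv := (q0rv s)(j \<mapsto> EMPTY), q0cp := (q0cp s)(j \<mapsto> R2)\<rparr>) k = Some A2"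
      using lin_deq_empty by (cases "j = k") auto
  qed (rule st0[unfolded eq])
next
  case (ret_deq s j d)
  let ?S = "s\<lparr>q0in := (q0in s)(k := v)\<rparr>"
  have st0: "absq0_step ?S (RetDeq d j) (?S\<lparr>q0cp := (q0cp ?S)(j \<mapsto> R3)\<rparr>)"
    by (rule absq0_step.ret_deq) (use ret_deq in auto)
  have eq: "?S\<lparr>q0cp := (q0cp ?S)(j \<mapsto> R3)\<rparr> = (s\<lparr>q0cp := (q0cp s)(j \<mapsto> R3)\<rparr>)\<lparr>q0in := (q0in (s\<lparr>q0cp := (q0cp s)(j \<mapsto> R3)\<rparr>))(k := v)\<rparr>"
    by simp
  show ?case
  proof (rule conjI)
    show "q0cp (s\<lparr>q0cp := (q0cp s)(j \<mapsto> R3)\<rparr>) k = Some A \<or> q0cp (s\<lparr>q0cp := (q0cp s)(j \<mapsto> R3)\<rparr>) k = Some A2"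
      using ret_deq by (cases "j = k") auto
  qed (rule st0[unfolded eq])
qed

lemma path_in_irrel:
  "path AbsQ0 s w t \<Longrightarrow> q0cp s k = Some A \<or> q0cp s k = Some A2 \<Longrightarrow>
   path AbsQ0 (s\<lparr>q0in := (q0in s)(k := v)\<rparr>) w (t\<lparr>q0in := (q0in t)(k := v)\<rparr>)"
proof (induction rule: path.induct)
  case (path_nil s)
  then show ?case by (simp add: path.path_nil)
next
  case (path_cons s a s' w t)
  have h: "absq0_step (s\<lparr>q0in := (q0in s)(k := v)\<rparr>) a (s'\<lparr>q0in := (q0in s')(k := v)\<rparr>) \<and>
   (q0cp s' k = Some A \<or> q0cp s' k = Some A2)"
    by (rule step_in_irrel[OF path_cons.hyps(1)[unfolded trans_AbsQ0] path_cons.prems])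
  show ?case
    by (rule path.path_cons[OF trans_AbsQ0[THEN iffD2, OF conjunct1[OF h]] path_cons.IH[OF conjunct2[OF h]]])
qed

lemma BrelO:
  assumes "Brel u s"
  shows "\<forall>k. absc (q0cp s k) = qcp u k"
    "\<forall>k. q0cp s k = Some A1 \<longrightarrow> k \<in> qO u"
    "\<forall>k v. q0in s k = Some v \<longrightarrow> q0cp s k = Some A1 \<or> q0cp s k = Some A \<or> q0cp s k = Some A2"
    "\<forall>k\<in>qO u. q0in s k = Some (lab_of u k)"
    "q0rv s = qrv u"
  using assms unfolding Brel_def by auto

lemma proj_LinEnqs[simp]: "proj Gamma (map (\<lambda>x. LinEnq (f x) x) l) = []"
  by (induction l) auto

lemma finish:
  assumes "Brel u s" "path AbsQ0 s w1 s'" "proj Gamma w1 = [a]" "path AbsQ0 s' w t"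
  shows "\<exists>s w0 t0. Brel u s \<and> path AbsQ0 s w0 t0 \<and> proj Gamma w0 = a # proj Gamma w"
  using assms by (intro exI[of _ s] exI[of _ "w1 @ w"] exI[of _ t]) (auto simp: path_append)

lemma path_one: "absq0_step s a s' \<Longrightarrow> path AbsQ0 s [a] s'"
  by (auto simp: path_Cons_iff path_Nil_iff)

lemma absc_A2: "absc c = Some A2 \<longleftrightarrow> c = Some A2" by (simp add: absc_eq_Some)
lemma absc_R: "x \<in> {R1, R2, R3} \<Longrightarrow> absc c = Some x \<longleftrightarrow> c = Some x" by (auto simp: absc_eq_Some)

lemma back_step:
  assumes st: "absq_step u a u'" and I: "InvQ u" and B: "Brel u' s'"
    and P: "path (AbsQ0 :: (absq0, 'x act) lts) s' w t"
  shows "\<exists>s w0 t0. Brel u s \<and> path (AbsQ0 :: (absq0, 'x act) lts) s w0 t0 \<and> proj Gamma w0 = a # proj Gamma w"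
proof -
  have I': "InvQ u'" using InvQ_step[OF st I] .
  note c = BrelO[OF B]
  obtain ls' where ls': "distinct ls'" "set ls' = {k \<in> qO u'. q0cp s' k = Some A \<or> q0cp s' k = Some A2}"
    "q0seq s' = map (lab_of u') ls'" "\<And>i j. i < j \<Longrightarrow> j < length ls' \<Longrightarrow> (ls'!i, ls'!j) \<notin> qlt u'"
    using BrelE[OF B] by blast
  from st show ?thesis
  proof (cases rule: absq_step.cases)
    case (inv_deq k)
    have cpk: "q0cp s' k = Some R1" using c(1)[rule_format, of k] inv_deq by (simp add: absc_eq_Some)
    have kO: "k \<notin> qO u" using InvQ_O_cp[OF I, of k] inv_deq by auto
    define s where "s = s'\<lparr>q0cp := (q0cp s')(k := None)\<rparr>"
    have stp: "absq0_step s (InvDeq k) (s\<lparr>q0cp := (q0cp s)(k \<mapsto> R1)\<rparr>)"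
      by (rule absq0_step.inv_deq) (simp add: s_def)
    have eq: "s\<lparr>q0cp := (q0cp s)(k \<mapsto> R1)\<rparr> = s'" using cpk by (simp add: s_def fun_upd_idem)
    have lo: "lab_of u = lab_of u'" using inv_deq by (auto simp: lab_of_def)
    have "Brel u s"
    proof (rule BrelI[where ls = ls'])
      show "set ls' = {j \<in> qO u. q0cp s j = Some A \<or> q0cp s j = Some A2}"
        using ls'(2) inv_deq kO by (auto simp: s_def)
    qed (use c ls' inv_deq kO cpk lo in \<open>auto simp: s_def domIff split: if_splits\<close>)
    then show ?thesis using finish[OF _ path_one[OF stp[unfolded eq]] _ P] inv_deq by simp
  next
    case (ret_deq k d)
    have cpk: "q0cp s' k = Some R3" using c(1)[rule_format, of k] ret_deq by (simp add: absc_eq_Some)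
    have kO: "k \<notin> qO u" using InvQ_O_cp[OF I, of k] ret_deq by auto
    define s where "s = s'\<lparr>q0cp := (q0cp s')(k \<mapsto> R2)\<rparr>"
    have stp: "absq0_step s (RetDeq d k) (s\<lparr>q0cp := (q0cp s)(k \<mapsto> R3)\<rparr>)"
      by (rule absq0_step.ret_deq) (use c(5) ret_deq in \<open>simp_all add: s_def\<close>)
    have eq: "s\<lparr>q0cp := (q0cp s)(k \<mapsto> R3)\<rparr> = s'" using cpk by (simp add: s_def fun_upd_idem)
    have lo: "lab_of u = lab_of u'" using ret_deq by (auto simp: lab_of_def)
    have "Brel u s"
    proof (rule BrelI[where ls = ls'])
      show "set ls' = {j \<in> qO u. q0cp s j = Some A \<or> q0cp s j = Some A2}"
        using ls'(2) ret_deq kO by (auto simp: s_def)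
    qed (use c ls' ret_deq kO cpk lo in \<open>auto simp: s_def split: if_splits\<close>)
    then show ?thesis using finish[OF _ path_one[OF stp[unfolded eq]] _ P] ret_deq by simp
  next
    case (ret_enq_pend k d)
    have cpk: "q0cp s' k = Some A2" using c(1)[rule_format, of k] ret_enq_pend by (simp add: absc_eq_Some)
    define s where "s = s'\<lparr>q0cp := (q0cp s')(k \<mapsto> A)\<rparr>"
    have stp: "absq0_step s (RetEnq k) (s\<lparr>q0cp := (q0cp s)(k \<mapsto> A2)\<rparr>)"
      by (rule absq0_step.ret_enq) (simp add: s_def)
    have eq: "s\<lparr>q0cp := (q0cp s)(k \<mapsto> A2)\<rparr> = s'" using cpk by (simp add: s_def fun_upd_idem)
    have lo: "lab_of u = lab_of u'" using ret_enq_pend by (auto simp: lab_of_def)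
    have "Brel u s"
    proof (rule BrelI[where ls = ls'])
      show "set ls' = {j \<in> qO u. q0cp s j = Some A \<or> q0cp s j = Some A2}"
        using ls'(2) ret_enq_pend cpk by (auto simp: s_def)
    qed (use c ls' ret_enq_pend cpk lo in \<open>auto simp: s_def split: if_splits\<close>)
    then show ?thesis using finish[OF _ path_one[OF stp[unfolded eq]] _ P] ret_enq_pend by simp
  next
    case (ret_enq_other k)
    have cpk: "q0cp s' k = Some A2" using c(1)[rule_format, of k] ret_enq_other by (simp add: absc_eq_Some)
    have kO: "k \<notin> qO u" using InvQ_PEND[OF I, of k] ret_enq_other by auto
    define s where "s = s'\<lparr>q0cp := (q0cp s')(k \<mapsto> A)\<rparr>"
    have stp: "absq0_step s (RetEnq k) (s\<lparr>q0cp := (q0cp s)(k \<mapsto> A2)\<rparr>)"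
      by (rule absq0_step.ret_enq) (simp add: s_def)
    have eq: "s\<lparr>q0cp := (q0cp s)(k \<mapsto> A2)\<rparr> = s'" using cpk by (simp add: s_def fun_upd_idem)
    have lo: "lab_of u = lab_of u'" using ret_enq_other by (auto simp: lab_of_def)
    have "Brel u s"
    proof (rule BrelI[where ls = ls'])
      show "set ls' = {j \<in> qO u. q0cp s j = Some A \<or> q0cp s j = Some A2}"
        using ls'(2) ret_enq_other kO by (auto simp: s_def)
    qed (use c ls' ret_enq_other kO cpk lo in \<open>auto simp: s_def split: if_splits\<close>)
    then show ?thesis using finish[OF _ path_one[OF stp[unfolded eq]] _ P] ret_enq_other by simp
  next
    case (inv_enq k d)
    have qk: "qcp u k = None" using inv_enq by (simp add: domIff)
    have kO: "k \<notin> qO u" using InvQ_O_cp[OF I, of k] qk by auto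
    have kO': "k \<in> qO u'" using inv_enq by simp
    have Ou: "qO u' = insert k (qO u)" using inv_enq by simp
    have lo: "j \<noteq> k \<Longrightarrow> lab_of u' j = lab_of u j" for j using inv_enq by (auto simp: lab_of_def)
    have lk: "lab_of u' k = Val d" using inv_enq by (simp add: lab_of_def)
    have ink: "q0in s' k = Some (Val d)" using c(4) kO' lk by auto
    have cpk: "q0cp s' k = Some A1 \<or> q0cp s' k = Some A" using c(1)[rule_format, of k] inv_enq
      by (simp add: absc_eq_Some)
    have ltu: "qlt u \<subseteq> qlt u'" using inv_enq by auto
    show ?thesis
    proof (cases "k \<in> set ls'")
      case False
      then have cpk1: "q0cp s' k = Some A1" using cpk ls'(2) kO' by auto
      define s where "s = s'\<lparr>q0in := (q0in s')(k := None), q0cp := (q0cp s')(k := None)\<rparr>"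
      have stp: "absq0_step s (InvEnq d k) (s\<lparr>q0in := (q0in s)(k \<mapsto> Val d), q0cp := (q0cp s)(k \<mapsto> A1)\<rparr>)"
        by (rule absq0_step.inv_enq) (simp add: s_def)
      have eq: "s\<lparr>q0in := (q0in s)(k \<mapsto> Val d), q0cp := (q0cp s)(k \<mapsto> A1)\<rparr> = s'"
        using cpk1 ink by (simp add: s_def fun_upd_idem)
      have "Brel u s"
      proof (rule BrelI[where ls = ls'])
        show "set ls' = {j \<in> qO u. q0cp s j = Some A \<or> q0cp s j = Some A2}"
          using ls'(2) Ou False by (auto simp: s_def)
      next
        show "q0seq s = map (lab_of u) ls'" using ls'(3) False lo by (simp add: s_def) (metis lo)
      next
        fix i j assume "i < j" "j < length ls'"
        then show "(ls'!i, ls'!j) \<notin> qlt u" using ls'(4) ltu by blast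
      next
        fix j show "absc (q0cp s j) = qcp u j"
          using c(1)[rule_format, of j] inv_enq qk by (auto simp: s_def)
      next
        fix j show "q0cp s j = Some A1 \<Longrightarrow> j \<in> qO u"
          using c(2) Ou by (auto simp: s_def split: if_splits)
      next
        fix j assume "q0in s j \<noteq> None"
        then show "q0cp s j = Some A1 \<or> q0cp s j = Some A \<or> q0cp s j = Some A2"
          using c(3) by (auto simp: s_def split: if_splits)
      next
        fix j assume "j \<in> qO u"
        then show "q0in s j = Some (lab_of u j)"
          using c(4) Ou lo kO by (auto simp: s_def)
      qed (use c inv_enq ls' in \<open>auto simp: s_def\<close>)
      then show ?thesis using finish[OF _ path_one[OF stp[unfolded eq]] _ P] inv_enq by simp
    next
      case True
      then obtain pre post where lsp: "ls' = pre @ k # post" by (meson split_list)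
      have dis: "distinct pre" "distinct post" "k \<notin> set pre" "k \<notin> set post" "set pre \<inter> set post = {}"
        using ls'(1) lsp by auto
      have cpkA: "q0cp s' k = Some A" using cpk ls'(2) True by auto
      have preA: "q0cp s' x = Some A" if x: "x \<in> set pre" for x
      proof (rule ccontr)
        assume nA: "q0cp s' x \<noteq> Some A"
        have xO: "x \<in> qO u'" and xc: "q0cp s' x = Some A \<or> q0cp s' x = Some A2"
          using x lsp ls'(2) by auto
        have xk: "x \<noteq> k" using x dis by auto
        with xO Ou have xOu: "x \<in> qO u" by auto
        from nA xc have "q0cp s' x = Some A2" by auto
        then have "qcp u x = Some A2" using c(1)[rule_format, of x] inv_enq xk by simp
        then have "x \<in> COMPs u" using InvQ_COMP[OF I xOu] by simp
        then have xk': "(x, k) \<in> qlt u'" using inv_enq by simp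
        obtain i where i: "i < length pre" "pre ! i = x" using x by (auto simp: in_set_conv_nth)
        have "(ls'!i, ls'!(length pre)) \<notin> qlt u'" using ls'(4)[of i "length pre"] i lsp by simp
        moreover have "ls'!i = x" "ls'!(length pre) = k" using i lsp by (auto simp: nth_append)
        ultimately show False using xk' by simp
      qed
      define s where "s = s'\<lparr>q0seq := map (lab_of u') post, q0in := (q0in s')(k := None),
         q0cp := (\<lambda>j. if j \<in> set pre then Some A1 else if j = k then None else q0cp s' j)\<rparr>"
      define sa where "sa = s\<lparr>q0in := (q0in s)(k \<mapsto> Val d), q0cp := (q0cp s)(k \<mapsto> A1)\<rparr>"
      have stp: "absq0_step s (InvEnq d k) sa"
        unfolding sa_def by (rule absq0_step.inv_enq) (use dis in \<open>simp add: s_def domIff\<close>)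
      have qsa: "q0in sa = q0in s'" using ink by (auto simp: sa_def s_def)
      have inv: "\<forall>x\<in>set (pre @ [k]). q0cp sa x = Some A1 \<and> (\<exists>n. q0in sa x = Some (Val n))"
      proof
        fix x assume x: "x \<in> set (pre @ [k])"
        then have xO: "x \<in> qO u'" using ls'(2) lsp by auto
        obtain v st where "qlab u' x = Some (v, st)" "v \<noteq> EMPTY" using InvQ_O_lab[OF I' xO] by auto
        then obtain n where "lab_of u' x = Val n" by (cases v) (auto simp: lab_of_def)
        then show "q0cp sa x = Some A1 \<and> (\<exists>n. q0in sa x = Some (Val n))"
          using x c(4) xO qsa by (auto simp: sa_def s_def)
      qed
      have dpk: "distinct (pre @ [k])" using dis by simp
      have pl: "path (AbsQ0 :: (absq0, 'x act) lts) sa (map (\<lambda>x. LinEnq (unval (the (q0in sa x))) x) (rev (pre @ [k])))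
       (sa\<lparr>q0seq := map (\<lambda>x. the (q0in sa x)) (pre @ [k]) @ q0seq sa,
          q0cp := (\<lambda>j. if j \<in> set (pre @ [k]) then Some A else q0cp sa j)\<rparr>)"
        by (rule lin_list[OF dpk inv])
      have eq: "sa\<lparr>q0seq := map (\<lambda>x. the (q0in sa x)) (pre @ [k]) @ q0seq sa,
          q0cp := (\<lambda>j. if j \<in> set (pre @ [k]) then Some A else q0cp sa j)\<rparr> = s'"
      proof -
        have f1: "map (\<lambda>x. the (q0in sa x)) (pre @ [k]) @ q0seq sa = q0seq s'"
        proof -
          have lsO: "set (pre @ [k]) \<subseteq> qO u'" using ls'(2) lsp by auto
          have "map (\<lambda>x. the (q0in sa x)) (pre @ [k]) = map (lab_of u') (pre @ [k])"
          proof (rule map_cong[OF refl])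
            fix x assume "x \<in> set (pre @ [k])"
            then have "x \<in> qO u'" using lsO by blast
            then show "the (q0in sa x) = lab_of u' x" using c(4) qsa by simp
          qed
          moreover have "q0seq sa = map (lab_of u') post" by (simp add: sa_def s_def)
          ultimately show ?thesis using ls'(3) lsp by simp
        qed
        have f2: "(\<lambda>j. if j \<in> set (pre @ [k]) then Some A else q0cp sa j) = q0cp s'"
          using preA cpkA by (auto simp: sa_def s_def fun_eq_iff)
        have f4: "q0rv sa = q0rv s'" by (simp add: sa_def s_def)
        show ?thesis using f1 f2 qsa f4 by (intro absq0.equality) simp_all
      qed
      have p2: "path (AbsQ0 :: (absq0, 'x act) lts) s (InvEnq d k # map (\<lambda>x. LinEnq (unval (the (q0in sa x))) x) (rev (pre @ [k]))) s'"
        using stp pl[unfolded eq] by (auto simp: path_Cons_iff)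
      have "Brel u s"
      proof (rule BrelI[where ls = post])
        show "distinct post" by (rule dis(2))
      next
        show "set post = {j \<in> qO u. q0cp s j = Some A \<or> q0cp s j = Some A2}"
        proof (intro equalityI subsetI)
          fix j assume j: "j \<in> set post"
          then have "j \<in> set ls'" "j \<notin> set pre" "j \<noteq> k" using lsp dis by auto
          then show "j \<in> {j \<in> qO u. q0cp s j = Some A \<or> q0cp s j = Some A2}"
            using ls'(2) Ou by (auto simp: s_def)
        next
          fix j assume j: "j \<in> {j \<in> qO u. q0cp s j = Some A \<or> q0cp s j = Some A2}"
          then have "j \<notin> set pre" "j \<noteq> k" using kO by (auto simp: s_def split: if_splits)
          moreover have "j \<in> set ls'" using j ls'(2) Ou \<open>j \<noteq> k\<close> \<open>j \<notin> set pre\<close> by (auto simp: s_def)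
          ultimately show "j \<in> set post" using lsp by auto
        qed
      next
        show "q0seq s = map (lab_of u) post" using dis(4) lo by (simp add: s_def) (metis lo)
      next
        fix i j assume ij: "i < j" "j < length post"
        have "(ls'!(Suc (length pre) + i), ls'!(Suc (length pre) + j)) \<notin> qlt u'"
          using ls'(4) ij lsp by simp
        moreover have "ls'!(Suc (length pre) + i) = post ! i" "ls'!(Suc (length pre) + j) = post ! j"
          using lsp by (simp_all add: nth_append)
        ultimately show "(post!i, post!j) \<notin> qlt u" using ltu by auto
      next
        fix j show "absc (q0cp s j) = qcp u j"
          using c(1)[rule_format, of j] inv_enq qk preA[of j] dis by (auto simp: s_def)
      next
        fix j show "q0cp s j = Some A1 \<Longrightarrow> j \<in> qO u"
          using c(2) Ou ls'(2) lsp dis by (auto simp: s_def split: if_splits)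
      next
        fix j assume "q0in s j \<noteq> None"
        then show "q0cp s j = Some A1 \<or> q0cp s j = Some A \<or> q0cp s j = Some A2"
          using c(3) by (auto simp: s_def split: if_splits)
      next
        fix j assume "j \<in> qO u"
        then show "q0in s j = Some (lab_of u j)"
          using c(4) Ou lo kO by (auto simp: s_def)
      qed (use c inv_enq in \<open>auto simp: s_def\<close>)
      then show ?thesis using finish[OF _ p2 _ P] inv_enq by simp
    qed
  next
    case (lin_deq k d k' st)
    have cpk: "q0cp s' k = Some R2" using c(1)[rule_format, of k] lin_deq by (simp add: absc_eq_Some)
    have kO: "k \<notin> qO u" using InvQ_O_cp[OF I, of k] lin_deq by auto
    have k'O: "k' \<in> qO u" using lin_deq by (auto simp: minO_def)
    have kk': "k \<noteq> k'" using kO k'O by auto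
    have k'O': "k' \<notin> qO u'" using lin_deq by simp
    have cpk': "q0cp s' k' = Some A \<or> q0cp s' k' = Some A2"
    proof -
      have "qcp u' k' = Some A1 \<or> qcp u' k' = Some A2" using InvQ_O_cp[OF I k'O] lin_deq kk' by simp
      moreover have "q0cp s' k' \<noteq> Some A1" using c(2) k'O' by auto
      ultimately show ?thesis using c(1)[rule_format, of k'] by (auto simp: absc_eq_Some)
    qed
    define s'' where "s'' = s'\<lparr>q0in := (q0in s')(k' := Some d)\<rparr>"
    have P'': "path (AbsQ0 :: (absq0, 'x act) lts) s'' w (t\<lparr>q0in := (q0in t)(k' := Some d)\<rparr>)"
      unfolding s''_def by (rule path_in_irrel[OF P cpk'])
    define s where "s = s''\<lparr>q0seq := q0seq s'' @ [d], q0rv := qrv u, q0cp := (q0cp s'')(k \<mapsto> R1)\<rparr>"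
    have stp: "absq0_step s (LinDeq d k) (s\<lparr>q0seq := q0seq s'', q0rv := (q0rv s)(k \<mapsto> d), q0cp := (q0cp s)(k \<mapsto> R2)\<rparr>)"
      by (rule absq0_step.lin_deq) (simp_all add: s_def)
    have eq: "s\<lparr>q0seq := q0seq s'', q0rv := (q0rv s)(k \<mapsto> d), q0cp := (q0cp s)(k \<mapsto> R2)\<rparr> = s''"
    proof -
      have "(q0rv s)(k \<mapsto> d) = q0rv s''" using c(5) lin_deq by (simp add: s_def s''_def)
      moreover have "(q0cp s)(k \<mapsto> R2) = q0cp s''" using cpk by (auto simp: s_def s''_def fun_eq_iff)
      ultimately show ?thesis by (simp add: s_def)
    qed
    have lo: "j \<noteq> k' \<Longrightarrow> lab_of u' j = lab_of u j" for j using lin_deq by (auto simp: lab_of_def)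
    have lk': "lab_of u k' = d" using lin_deq by (simp add: lab_of_def)
    have k'ls: "k' \<notin> set ls'" using ls'(2) k'O' by auto
    have Ou: "qO u = insert k' (qO u')" using lin_deq k'O by auto
    have "Brel u s"
    proof (rule BrelI[where ls = "ls' @ [k']"])
      show "distinct (ls' @ [k'])" using ls'(1) k'ls by simp
    next
      show "set (ls' @ [k']) = {j \<in> qO u. q0cp s j = Some A \<or> q0cp s j = Some A2}"
        using ls'(2) Ou kO kk' cpk' by (auto simp: s_def s''_def)
    next
      show "q0seq s = map (lab_of u) (ls' @ [k'])"
        using ls'(3) lo k'ls lk' by (simp add: s_def s''_def) (metis lo)
    next
      fix i j assume ij: "i < j" "j < length (ls' @ [k'])"
      show "((ls' @ [k'])!i, (ls' @ [k'])!j) \<notin> qlt u"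
      proof (cases "j < length ls'")
        case True
        then have "(ls'!i, ls'!j) \<notin> qlt u'" using ls'(4) ij by auto
        moreover have "ls'!i \<noteq> k'" "ls'!j \<noteq> k'" using True ij k'ls nth_mem by (metis order.strict_trans)+
        ultimately show ?thesis using True ij lin_deq by (auto simp: nth_append)
      next
        case False
        then have "j = length ls'" using ij by simp
        moreover have "ls'!i \<in> qO u" using ij \<open>j = length ls'\<close> ls'(2) Ou nth_mem by fastforce
        ultimately show ?thesis using ij lin_deq by (auto simp: nth_append minO_def)
      qed
    next
      fix j show "absc (q0cp s j) = qcp u j"
        using c(1)[rule_format, of j] lin_deq by (auto simp: s_def s''_def)
    next
      fix j show "q0cp s j = Some A1 \<Longrightarrow> j \<in> qO u"
        using c(2) Ou by (auto simp: s_def s''_def split: if_splits)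
    next
      fix j assume "q0in s j \<noteq> None"
      then show "q0cp s j = Some A1 \<or> q0cp s j = Some A \<or> q0cp s j = Some A2"
        using c(3) cpk cpk' kk' by (auto simp: s_def s''_def split: if_splits)
    next
      fix j assume "j \<in> qO u"
      then show "q0in s j = Some (lab_of u j)"
        using c(4) Ou lo lk' by (auto simp: s_def s''_def)
    next
      show "q0rv s = qrv u" by (simp add: s_def)
    qed
    moreover have "Brel u' s''"
    proof (rule BrelI[where ls = ls'])
      fix j assume "q0in s'' j \<noteq> None"
      then show "q0cp s'' j = Some A1 \<or> q0cp s'' j = Some A \<or> q0cp s'' j = Some A2"
        using c(3) cpk' by (auto simp: s''_def split: if_splits)
    next
      fix j assume "j \<in> qO u'"
      then show "q0in s'' j = Some (lab_of u' j)" using c(4) k'O' by (auto simp: s''_def)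
    qed (use c ls' in \<open>auto simp: s''_def\<close>)
    ultimately show ?thesis using finish[OF _ path_one[OF stp[unfolded eq]] _ P''] lin_deq by simp
  next
    case (lin_deq_empty k)
    have cpk: "q0cp s' k = Some R2" using c(1)[rule_format, of k] lin_deq_empty by (simp add: absc_eq_Some)
    have kO: "k \<notin> qO u" using InvQ_O_cp[OF I, of k] lin_deq_empty by auto
    have Ou: "qO u' = qO u" using lin_deq_empty by simp
    have lo: "lab_of u = lab_of u'" using lin_deq_empty by (auto simp: lab_of_def)
    have lsA: "q0cp s' x = Some A" if x: "x \<in> set ls'" for x
    proof -
      have xO: "x \<in> qO u" and xc: "q0cp s' x = Some A \<or> q0cp s' x = Some A2" using x ls'(2) Ou by auto
      have "x \<noteq> k" using xO kO by auto
      show ?thesis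
      proof (rule ccontr)
        assume "q0cp s' x \<noteq> Some A"
        with xc have "q0cp s' x = Some A2" by auto
        then have "qcp u x = Some A2" using c(1)[rule_format, of x] lin_deq_empty \<open>x \<noteq> k\<close> by simp
        then have "x \<in> COMPs u" using InvQ_COMP[OF I xO] by simp
        then show False using lin_deq_empty xO unfolding COMPs_def by fastforce
      qed
    qed
    have kls: "k \<notin> set ls'" using ls'(2) kO Ou by auto
    define s where "s = s'\<lparr>q0seq := [], q0rv := qrv u,
       q0cp := (\<lambda>j. if j \<in> set ls' then Some A1 else if j = k then Some R1 else q0cp s' j)\<rparr>"
    define sa where "sa = s\<lparr>q0rv := (q0rv s)(k \<mapsto> EMPTY), q0cp := (q0cp s)(k \<mapsto> R2)\<rparr>"
    have stp: "absq0_step s (LinDeq EMPTY k) sa"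
      unfolding sa_def by (rule absq0_step.lin_deq_empty) (use kls in \<open>simp_all add: s_def\<close>)
    have inv: "\<forall>x\<in>set ls'. q0cp sa x = Some A1 \<and> (\<exists>n. q0in sa x = Some (Val n))"
    proof
      fix x assume x: "x \<in> set ls'"
      then have xO: "x \<in> qO u'" using ls'(2) by auto
      obtain v st where "qlab u' x = Some (v, st)" "v \<noteq> EMPTY" using InvQ_O_lab[OF I' xO] by auto
      then obtain n where "lab_of u' x = Val n" by (cases v) (auto simp: lab_of_def)
      then show "q0cp sa x = Some A1 \<and> (\<exists>n. q0in sa x = Some (Val n))"
        using x kls c(4) xO by (auto simp: sa_def s_def)
    qed
    have pl: "path (AbsQ0 :: (absq0, 'x act) lts) sa (map (\<lambda>x. LinEnq (unval (the (q0in sa x))) x) (rev ls'))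
     (sa\<lparr>q0seq := map (\<lambda>x. the (q0in sa x)) ls' @ q0seq sa,
        q0cp := (\<lambda>j. if j \<in> set ls' then Some A else q0cp sa j)\<rparr>)"
      by (rule lin_list[OF ls'(1) inv])
    have eq: "sa\<lparr>q0seq := map (\<lambda>x. the (q0in sa x)) ls' @ q0seq sa,
        q0cp := (\<lambda>j. if j \<in> set ls' then Some A else q0cp sa j)\<rparr> = s'"
    proof -
      have "map (\<lambda>x. the (q0in sa x)) ls' = q0seq s'"
        using ls'(2,3) c(4) by (auto simp: sa_def s_def)
      moreover have "(\<lambda>j. if j \<in> set ls' then Some A else q0cp sa j) = q0cp s'"
        using lsA cpk kls by (auto simp: sa_def s_def fun_eq_iff)
      moreover have "(q0rv s)(k \<mapsto> EMPTY) = q0rv s'" using c(5) lin_deq_empty by (simp add: s_def)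
      ultimately show ?thesis by (simp add: sa_def s_def)
    qed
    have p2: "path (AbsQ0 :: (absq0, 'x act) lts) s (LinDeq EMPTY k # map (\<lambda>x. LinEnq (unval (the (q0in sa x))) x) (rev ls')) s'"
      using stp pl[unfolded eq] by (auto simp: path_Cons_iff)
    have "Brel u s"
    proof (rule BrelI[where ls = "[]"])
      show "set [] = {j \<in> qO u. q0cp s j = Some A \<or> q0cp s j = Some A2}"
        using ls'(2) Ou kO by (auto simp: s_def)
    next
      fix j show "absc (q0cp s j) = qcp u j"
        using c(1)[rule_format, of j] lsA[of j] lin_deq_empty by (auto simp: s_def)
    next
      fix j v assume "q0in s j \<noteq> None"
      then show "q0cp s j = Some A1 \<or> q0cp s j = Some A \<or> q0cp s j = Some A2"
        using c(3) cpk by (auto simp: s_def)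
    qed (use c ls' Ou kO lo in \<open>auto simp: s_def split: if_splits\<close>)
    then show ?thesis using finish[OF _ p2 _ P] lin_deq_empty by simp
  qed
qed

lemma exists_max:
  assumes "finite X" "X \<noteq> {}" "Relation.trans r" "irrefl r"
  shows "\<exists>m\<in>X. \<forall>x\<in>X. (m, x) \<notin> r"
  using assms(1,2)
proof (induction rule: finite_ne_induct)
  case (singleton y) then show ?case using assms(4) by (auto simp: irrefl_def)
next
  case (insert y F)
  then obtain m where m: "m \<in> F" "\<forall>x\<in>F. (m, x) \<notin> r" by blast
  show ?case
  proof (cases "(m, y) \<in> r")
    case True
    have "\<forall>x\<in>insert y F. (y, x) \<notin> r"
    proof
      fix x assume "x \<in> insert y F"
      then show "(y, x) \<notin> r"
      proof
        assume "x = y" then show ?thesis using assms(4) by (auto simp: irrefl_def)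
      next
        assume "x \<in> F"
        then show ?thesis using m True assms(3) unfolding Relation.trans_def by blast
      qed
    qed
    then show ?thesis by blast
  next
    case False then show ?thesis using m by blast
  qed
qed

lemma lin_ext:
  assumes "finite S" "Relation.trans r" "irrefl r"
  shows "\<exists>ls. distinct ls \<and> set ls = S \<and> (\<forall>i j. i < j \<longrightarrow> j < length ls \<longrightarrow> (ls!i, ls!j) \<notin> r)"
  using assms(1)
proof (induction rule: finite_remove_induct)
  case empty then show ?case by auto
next
  case (remove X)
  obtain m where m: "m \<in> X" "\<forall>x\<in>X. (m, x) \<notin> r" using exists_max[OF remove(1,2) assms(2,3)] by blast
  obtain ls where ls: "distinct ls" "set ls = X - {m}" "\<forall>i j. i < j \<longrightarrow> j < length ls \<longrightarrow> (ls!i, ls!j) \<notin> r"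
    using remove(4)[OF m(1)] by blast
  have "\<forall>i j. i < j \<longrightarrow> j < length (m # ls) \<longrightarrow> ((m # ls)!i, (m # ls)!j) \<notin> r"
  proof (intro allI impI)
    fix i j assume ij: "i < j" "j < length (m # ls)"
    then obtain j' where j': "j = Suc j'" by (cases j) auto
    show "((m # ls)!i, (m # ls)!j) \<notin> r"
    proof (cases i)
      case 0
      have "ls ! j' \<in> X" using ij j' ls(2) nth_mem by fastforce
      then show ?thesis using 0 j' m by simp
    next
      case (Suc i')
      then show ?thesis using ls(3) ij j' by auto
    qed
  qed
  then show ?case using ls m by (intro exI[of _ "m # ls"]) auto
qed

definition NoA :: "absq \<Rightarrow> bool" where "NoA u \<longleftrightarrow> (\<forall>k. qcp u k \<noteq> Some A)"

lemma NoA_step: "absq_step u a u' \<Longrightarrow> NoA u \<Longrightarrow> NoA u'"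
  by (induction rule: absq_step.induct) (auto simp: NoA_def)

lemma NoA_path: "path AbsQ u p v \<Longrightarrow> NoA u \<Longrightarrow> NoA v"
  by (induction rule: path.induct) (auto intro: NoA_step)

lemma Brel_exists:
  assumes I: "InvQ u" and NA: "NoA u"
  shows "\<exists>s. Brel u s"
proof -
  have "finite (qO u)" using I unfolding InvQ_def by auto
  then have fin: "finite {k \<in> qO u. qcp u k = Some A2}" by (rule finite_subset[rotated]) auto
  have tr: "Relation.trans (qlt u)" "irrefl (qlt u)" using I unfolding InvQ_def by auto
  obtain ls where ls: "distinct ls" "set ls = {k \<in> qO u. qcp u k = Some A2}"
    "\<forall>i j. i < j \<longrightarrow> j < length ls \<longrightarrow> (ls!i, ls!j) \<notin> qlt u"
    using lin_ext[OF fin tr] by iprover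
  define s where "s = \<lparr>q0seq = map (lab_of u) ls, q0in = (\<lambda>k. if k \<in> qO u then Some (lab_of u k) else None),
     q0rv = qrv u, q0cp = (\<lambda>k. if qcp u k = Some A1 \<and> k \<notin> qO u then Some A else qcp u k)\<rparr>"
  have cps: "q0cp s k = (if qcp u k = Some A1 \<and> k \<notin> qO u then Some A else qcp u k)" for k
    by (simp add: s_def)
  have ins: "q0in s k = (if k \<in> qO u then Some (lab_of u k) else None)" for k
    by (simp add: s_def)
  have "Brel u s"
  proof (rule BrelI[where ls = ls])
    fix k show "absc (q0cp s k) = qcp u k"
      using NA unfolding cps NoA_def by (cases "qcp u k") auto
  next
    fix k assume "q0cp s k = Some A1"
    then show "k \<in> qO u" unfolding cps by (auto split: if_splits)
  next
    fix k assume "q0in s k \<noteq> None"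
    then have "k \<in> qO u" unfolding ins by (auto split: if_splits)
    then show "q0cp s k = Some A1 \<or> q0cp s k = Some A \<or> q0cp s k = Some A2"
      using InvQ_O_cp[OF I] unfolding cps by auto
  next
    fix k assume "k \<in> qO u"
    then show "q0in s k = Some (lab_of u k)" unfolding ins by simp
  next
    show "q0rv s = qrv u" by (simp add: s_def)
  next
    show "distinct ls" by (rule ls(1))
  next
    have "\<forall>k \<in> qO u. q0cp s k = qcp u k" unfolding cps by auto
    then show "set ls = {k \<in> qO u. q0cp s k = Some A \<or> q0cp s k = Some A2}"
      using ls(2) InvQ_O_cp[OF I] NA unfolding NoA_def by auto
  next
    show "q0seq s = map (lab_of u) ls" by (simp add: s_def)
  next
    fix i j assume "i < j" "j < length ls"
    then show "(ls!i, ls!j) \<notin> qlt u" using ls(3) by blast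
  qed
  then show ?thesis by blast
qed

lemma back_path:
  assumes "path AbsQ u p v" "InvQ u" "Brel v sv"
  shows "\<exists>s w t. Brel u s \<and> path (AbsQ0 :: (absq0, 'x act) lts) s w t \<and> proj Gamma w = (p :: 'x act list)"
  using assms
proof (induction rule: path.induct)
  case (path_nil s)
  then show ?case by (intro exI[of _ sv] exI[of _ "[]"] exI[of _ sv]) (auto simp: path.path_nil)
next
  case (path_cons s a s' w t)
  have st: "absq_step s a s'" using path_cons.hyps(1) by simp
  have I': "InvQ s'" using InvQ_step[OF st path_cons.prems(1)] .
  obtain s0' w0' t0' where h: "Brel s' s0'" "path (AbsQ0 :: (absq0, 'x act) lts) s0' w0' t0'" "proj Gamma w0' = w"
    using path_cons.IH[OF I' path_cons.prems(2)] by blast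
  show ?case using back_step[OF st path_cons.prems(1) h(1) h(2)] h(3) by auto
qed

lemma i0_eq: "q0seq s = [] \<Longrightarrow> q0in s = Map.empty \<Longrightarrow> q0rv s = Map.empty \<Longrightarrow> q0cp s = Map.empty \<Longrightarrow> s = i0"
  apply (cases s)
  apply (simp only: absq0.select_convs)
  done

lemma Brel_init_eq: "Brel iQ s \<Longrightarrow> s = i0"
proof -
  assume B: "Brel iQ s"
  note c = BrelO[OF B]
  obtain ls where ls: "set ls = {k \<in> qO iQ. q0cp s k = Some A \<or> q0cp s k = Some A2}" "q0seq s = map (lab_of iQ) ls"
    by (rule BrelE[OF B])
  from ls(1) have "ls = []" by simp
  with ls(2) have s1: "q0seq s = []" by simp
  have cp: "q0cp s k = None" for k using c(1) absc_eq_None by simp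
  have inn: "q0in s k = None" for k
  proof (cases "q0in s k")
    case (Some v) then show ?thesis using c(3) cp[of k] by auto
  qed simp
  have s2: "q0cp s = Map.empty" using cp by (simp add: fun_eq_iff)
  have s3: "q0in s = Map.empty" using inn by (simp add: fun_eq_iff)
  have s4: "q0rv s = Map.empty" using c(5) by simp
  show "s = i0" using s1 s3 s4 s2 by (rule i0_eq)
qed

lemma proj_snoc_split: "proj G w0 = p @ [g] \<Longrightarrow> \<exists>x y. w0 = x @ g # y \<and> proj G x = p"
proof (induction w0 arbitrary: p)
  case Nil then show ?case by simp
next
  case (Cons b w0)
  show ?case
  proof (cases "b \<in> G")
    case True
    show ?thesis
    proof (cases p)
      case Nil
      then show ?thesis using Cons.prems True by (intro exI[of _ "[]"] exI[of _ w0]) simp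
    next
      case (Cons p0 p')
      then have "proj G w0 = p' @ [g]" "b = p0" using Cons.prems True by auto
      then obtain x y where "w0 = x @ g # y" "proj G x = p'" using Cons.IH by blast
      then show ?thesis using True \<open>b = p0\<close> Cons by (intro exI[of _ "b # x"] exI[of _ y]) simp
    qed
  next
    case False
    then have "proj G w0 = p @ [g]" using Cons.prems by simp
    then obtain x y where "w0 = x @ g # y" "proj G x = p" using Cons.IH by blast
    then show ?thesis using False by (intro exI[of _ "b # x"] exI[of _ y]) simp
  qed
qed

lemma nodup_uniq: "no_dup_enq w \<Longrightarrow> uniq_enq w"
  unfolding uniq_enq_def
proof (intro allI impI)
  fix n k k' assume nd: "no_dup_enq w" and a: "InvEnq n k \<in> set w" and b: "InvEnq n k' \<in> set w"
  obtain i where i: "i < length w" "w ! i = InvEnq n k" using a by (auto simp: in_set_conv_nth)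
  obtain j where j: "j < length w" "w ! j = InvEnq n k'" using b by (auto simp: in_set_conv_nth)
  show "k = k'"
  proof (cases i j rule: linorder_cases)
    case less then show ?thesis using nd i j unfolding no_dup_enq_def by blast
  next
    case equal then show ?thesis using i j by simp
  next
    case greater then show ?thesis using nd i j unfolding no_dup_enq_def by blast
  qed
qed

lemma uniq_mono: "uniq_enq q \<Longrightarrow> set p \<subseteq> set q \<Longrightarrow> uniq_enq p"
  unfolding uniq_enq_def by blast

lemma set_proj: "set (proj G w) \<subseteq> set w" by (auto simp: proj_def)

lemma first_call: "absq0_step i0 b m \<Longrightarrow> b \<in> Calls"
  by (erule absq0_step.cases) (auto simp: Calls_def image_iff)

lemma sim_path:
  assumes fs: "fwd_sim Gamma L (AbsQ :: (absq, 'x act) lts) fs" and wf: "lts_wf L"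
  shows "path L s w t \<Longrightarrow> (s, u) \<in> fs \<Longrightarrow> \<exists>u'. (t, u') \<in> fs \<and> path (AbsQ :: (absq, 'x act) lts) u (proj Gamma w) u'"
proof (induction arbitrary: u rule: path.induct)
  case (path_nil s)
  then show ?case by (auto simp: path_Nil_iff)
next
  case (path_cons s a s' w t)
  have aL: "a \<in> alpha L" using path_cons.hyps(1) wf unfolding lts_wf_def by auto
  show ?case
  proof (cases "a \<in> Gamma")
    case True
    then obtain u'' w1 w2 where h: "(s', u'') \<in> fs" "path (AbsQ :: (absq, 'x act) lts) u (w1 @ a # w2) u''"
      "set w1 \<subseteq> alpha (AbsQ :: (absq, 'x act) lts) - Gamma" "set w2 \<subseteq> alpha (AbsQ :: (absq, 'x act) lts) - Gamma"
      using fs path_cons.hyps(1) path_cons.prems unfolding fwd_sim_def by blast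
    then have "w1 = []" "w2 = []" by (auto simp: alpha_AbsQ)
    with h have p1: "path (AbsQ :: (absq, 'x act) lts) u [a] u''" by simp
    obtain u' where "(t, u') \<in> fs" "path (AbsQ :: (absq, 'x act) lts) u'' (proj Gamma w) u'"
      using path_cons.IH[OF h(1)] by blast
    then show ?thesis using p1 True by (auto simp: path_Cons_iff path_Nil_iff)
  next
    case False
    then obtain u'' w1 where h: "(s', u'') \<in> fs" "path (AbsQ :: (absq, 'x act) lts) u w1 u''"
      "set w1 \<subseteq> alpha (AbsQ :: (absq, 'x act) lts) - Gamma"
      using fs path_cons.hyps(1) path_cons.prems aL unfolding fwd_sim_def by blast
    then have "w1 = []" by (auto simp: alpha_AbsQ)
    with h have "u'' = u" by (simp add: path_Nil_iff)
    then show ?thesis using path_cons.IH[OF h(1)] False by simp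
  qed
qed

theorem corollary1:
  fixes L :: "('s, 'x act) lts"
  assumes "queue_impl L" and "fixed_deq_lin L"
  shows "(proj Gamma ` traces L \<subseteq> proj Gamma ` traces (AbsQ0 :: (absq0, 'x act) lts))
         \<longleftrightarrow> (\<exists>fs. fwd_sim Gamma L (AbsQ :: (absq, 'x act) lts) fs)"
proof
  assume LHS: "proj Gamma ` traces L \<subseteq> proj Gamma ` traces (AbsQ0 :: (absq0, 'x act) lts)"
  have wf: "lts_wf L" and tr: "\<And>w. w \<in> traces L \<Longrightarrow> well_formed w \<and> no_dup_enq w"
    using assms(1) unfolding queue_impl_def by auto
  have lhs: "\<exists>w0 t. path (AbsQ0 :: (absq0, 'x act) lts) i0 w0 t \<and> proj Gamma w0 = proj Gamma w"
    if "w \<in> traces L" for w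
  proof -
    have "proj Gamma w \<in> proj Gamma ` traces (AbsQ0 :: (absq0, 'x act) lts)" using LHS that by blast
    then show ?thesis by (auto simp: traces_def init_AbsQ0)
  qed
  define fs where "fs = {(s, u). \<exists>w. path L (init L) w s \<and> path (AbsQ :: (absq, 'x act) lts) iQ (proj Gamma w) u}"
  have c1: "{u. (init L, u) \<in> fs} = {init (AbsQ :: (absq, 'x act) lts)}"
  proof (intro equalityI subsetI)
    fix u assume "u \<in> {u. (init L, u) \<in> fs}"
    then obtain w where w: "path L (init L) w (init L)" "path (AbsQ :: (absq, 'x act) lts) iQ (proj Gamma w) u"
      unfolding fs_def by auto
    have "proj Gamma w = []"
    proof (rule ccontr)
      assume ne: "proj Gamma w \<noteq> []"
      have wt: "w \<in> traces L" using w(1) unfolding traces_def by auto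
      obtain w0 t where w0: "path (AbsQ0 :: (absq0, 'x act) lts) i0 w0 t" "proj Gamma w0 = proj Gamma w"
        using lhs[OF wt] by blast
      then obtain b w0' where b: "w0 = b # w0'" using ne by (cases w0) auto
      then obtain m where "absq0_step i0 b m" using w0(1) by (auto simp: path_Cons_iff)
      then have bC: "b \<in> Calls" by (rule first_call)
      then have "b \<in> Gamma" unfolding Gamma_def by auto
      then have "b \<in> set (proj Gamma w0)" using b by simp
      then have "b \<in> set (proj Gamma w)" by (simp only: w0(2))
      then have "b \<in> set w" using set_proj[of Gamma w] by (rule subsetD[rotated])
      then obtain i where i: "i < length w" "w ! i = b" by (auto simp: in_set_conv_nth)
      have "path L (init L) (w @ w) (init L)" using w(1) path_append by metis
      then have "w @ w \<in> traces L" unfolding traces_def by blast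
      then have wfw: "well_formed (w @ w)" using tr by blast
      have "(w @ w) ! i = b" "(w @ w) ! (length w + i) = b" using i by (auto simp: nth_append)
      moreover have "i < length w + i" "length w + i < length (w @ w)" using i by auto
      ultimately show False using wfw bC unfolding well_formed_def by metis
    qed
    then show "u \<in> {init (AbsQ :: (absq, 'x act) lts)}" using w(2) by (simp add: path_Nil_iff init_AbsQ)
  next
    fix u assume "u \<in> {init (AbsQ :: (absq, 'x act) lts)}"
    then show "u \<in> {u. (init L, u) \<in> fs}" unfolding fs_def
      by (auto simp: init_AbsQ path_Nil_iff intro!: exI[of _ "[]"])
  qed
  have c2: "\<exists>u' w1 w2. (s', u') \<in> fs \<and> path (AbsQ :: (absq, 'x act) lts) u (w1 @ g # w2) u' \<and>
           set w1 \<subseteq> alpha (AbsQ :: (absq, 'x act) lts) - Gamma \<and> set w2 \<subseteq> alpha (AbsQ :: (absq, 'x act) lts) - Gamma"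
    if h: "(s, g, s') \<in> trans L" "g \<in> Gamma" "(s, u) \<in> fs" for s g s' u
  proof -
    obtain w where w: "path L (init L) w s" "path (AbsQ :: (absq, 'x act) lts) iQ (proj Gamma w) u"
      using h(3) unfolding fs_def by auto
    have wg: "path L (init L) (w @ [g]) s'" using w(1) h(1) by (auto simp: path_snoc)
    then have wgt: "w @ [g] \<in> traces L" unfolding traces_def by auto
    then have ue: "uniq_enq (w @ [g])" using tr nodup_uniq by blast
    obtain w0 t where w0: "path (AbsQ0 :: (absq0, 'x act) lts) i0 w0 t" "proj Gamma w0 = proj Gamma (w @ [g])"
      using lhs[OF wgt] by blast
    from w0(2) have "proj Gamma w0 = proj Gamma w @ [g]" using h(2) by simp
    then have "\<exists>x y. w0 = x @ g # y \<and> proj Gamma x = proj Gamma w" by (rule proj_snoc_split)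
    then obtain x y where xy: "w0 = x @ g # y" "proj Gamma x = proj Gamma w" by blast
    have "\<exists>m. path (AbsQ0 :: (absq0, 'x act) lts) i0 x m \<and> path (AbsQ0 :: (absq0, 'x act) lts) m (g # y) t"
      using path_append[THEN iffD1, OF w0(1)[unfolded xy(1)]] .
    then obtain m where m1: "path (AbsQ0 :: (absq0, 'x act) lts) i0 x m" and m2: "path (AbsQ0 :: (absq0, 'x act) lts) m (g # y) t"
      by blast
    from m2 obtain m' where "(m, g, m') \<in> trans (AbsQ0 :: (absq0, 'x act) lts)" by (auto simp: path_Cons_iff)
    then have m: "path (AbsQ0 :: (absq0, 'x act) lts) i0 x m" "absq0_step m g m'" using m1 by simp_all
    have "set (proj Gamma x) \<subseteq> set (w @ [g])" using xy(2) set_proj[of Gamma w] by auto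
    then have ux: "uniq_enq (proj Gamma x)" using uniq_mono[OF ue] by blast
    have B: "Brel u m" using J[OF m(1) _ ux] w(2) xy(2) by simp
    have I: "InvQ u" using InvQ_path[OF w(2) InvQ_init[unfolded init_AbsQ]] .
    obtain u' where u': "absq_step u g u'" using Brel_fwd[OF m(2) B I h(2)] by blast
    have pu: "path (AbsQ :: (absq, 'x act) lts) iQ (proj Gamma w @ [g]) u'"
      unfolding path_snoc by (rule exI[of _ u], rule conjI[OF w(2)], simp add: u')
    have "proj Gamma (w @ [g]) = proj Gamma w @ [g]" using h(2) by simp
    with pu have pu': "path (AbsQ :: (absq, 'x act) lts) iQ (proj Gamma (w @ [g])) u'" by (simp only:)
    have "(s', u') \<in> fs" unfolding fs_def using wg pu' by blast
    moreover have "path (AbsQ :: (absq, 'x act) lts) u ([] @ g # []) u'" using u' by (simp add: path_Cons_iff path_Nil_iff)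
    ultimately show ?thesis by (intro exI[of _ u'] exI[of _ "[]"] conjI) auto
  qed
  have c3: "\<exists>u' w. (s', u') \<in> fs \<and> path (AbsQ :: (absq, 'x act) lts) u w u' \<and> set w \<subseteq> alpha (AbsQ :: (absq, 'x act) lts) - Gamma"
    if h: "(s, e, s') \<in> trans L" "e \<in> alpha L - Gamma" "(s, u) \<in> fs" for s e s' u
  proof -
    obtain w where w: "path L (init L) w s" "path (AbsQ :: (absq, 'x act) lts) iQ (proj Gamma w) u"
      using h(3) unfolding fs_def by auto
    have "path L (init L) (w @ [e]) s'" using w(1) h(1) by (auto simp: path_snoc)
    then have "(s', u) \<in> fs" unfolding fs_def using w(2) h(2) by auto
    then show ?thesis by (intro exI[of _ u] exI[of _ "[]"]) (auto simp: path_Nil_iff)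
  qed
  have "fwd_sim Gamma L (AbsQ :: (absq, 'x act) lts) fs"
    unfolding fwd_sim_def using c1 c2 c3 by blast
  then show "\<exists>fs. fwd_sim Gamma L (AbsQ :: (absq, 'x act) lts) fs" by blast
next
  assume "\<exists>fs. fwd_sim Gamma L (AbsQ :: (absq, 'x act) lts) fs"
  then obtain fs where fs: "fwd_sim Gamma L (AbsQ :: (absq, 'x act) lts) fs" by blast
  have wf: "lts_wf L" using assms(1) unfolding queue_impl_def by auto
  have init: "(init L, iQ) \<in> fs" using fs unfolding fwd_sim_def by (auto simp: init_AbsQ)
  show "proj Gamma ` traces L \<subseteq> proj Gamma ` traces (AbsQ0 :: (absq0, 'x act) lts)"
  proof
    fix p assume "p \<in> proj Gamma ` traces L"
    then obtain w t where w: "p = proj Gamma w" "path L (init L) w t" unfolding traces_def by auto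
    obtain u where u: "path (AbsQ :: (absq, 'x act) lts) iQ (proj Gamma w) u"
      using sim_path[OF fs wf w(2) init] by blast
    have I: "InvQ u" using InvQ_path[OF u InvQ_init[unfolded init_AbsQ]] .
    have NA: "NoA u" using NoA_path[OF u] by (simp add: NoA_def)
    obtain sv where "Brel u sv" using Brel_exists[OF I NA] by blast
    then obtain s w0 t0 where h: "Brel iQ s" "path (AbsQ0 :: (absq0, 'x act) lts) s w0 t0" "proj Gamma w0 = proj Gamma w"
      using back_path[OF u InvQ_init[unfolded init_AbsQ]] by blast
    have "s = i0" using Brel_init_eq[OF h(1)] .
    then have "w0 \<in> traces (AbsQ0 :: (absq0, 'x act) lts)" using h(2) by (auto simp: traces_def init_AbsQ0)
    moreover have "p = proj Gamma w0" using h(3) w(1) by simp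
    ultimately show "p \<in> proj Gamma ` traces (AbsQ0 :: (absq0, 'x act) lts)" by (rule rev_image_eqI)
  qed
qed

end
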